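(* Consider an $(N,z)$-ensemble of one-dimensional random spring networks on the circle (defined in the context), $N\ge3$. Then for every fixed graph (conditioning on $\mathbf S$), $\operatorname{Var}(\Delta l\mid\mathbf S)=\frac2z\big(1-\frac1N\big)\operatorname{Var}(\bar l)$, and hence $$\operatorname{Var}(\Delta l)=\frac2z\Big(1-\frac1N\Big)\operatorname{Var}(\bar l),$$ and the expected conditional variance satisfies $$\frac{\mathbb E_{\bar l}\big[\operatorname{Var}(\Delta l\mid \bar l)\big]}{\operatorname{Var}(\bar l)}=\frac2z\Big(1-\frac1N\Big)\Big[1-\frac2z\Big(1-\frac1N\Big)\Big],$$ where $\operatorname{Var}(\bar l)=1/12$.
   Context: Let the circle be $\mathbb R/\mathbb Z$. Fix an integer $N\ge3$ and $z$ with $2\le z\le N-1$ and $M:=Nz/2$ an integer. An $(N,z)$-network is generated by: (i) node positions $x_1,\dots,x_N$ i.i.d. uniform on $\mathbb R/\mathbb Z$; (ii) node $k$ joined to node $k+1$ by a spring for $k=1,\dots,N$ (indices mod $N$); (iii) further springs between randomly chosen node pairs (random procedure independent of positions), at most one spring per unordered pair, until there are $M$ springs. A spring joining nodes $a<b$ is oriented from $a$ to $b$, with initial signed length $\bar l_e\in[-1/2,1/2)$ the representative of $x_b-x_a$ mod $1$ in $[-1/2,1/2)$; each $\bar l_e$ is uniform on $[-1/2,1/2)$. With $\mathbf C$ a signed cycle matrix of the resulting directed graph (fundamental cycles of a spanning tree, oriented arbitrarily, entries $\pm1$ for edges on a cycle with agreeing/opposite orientation, $0$ otherwise), the relaxed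 lengths are $\boldsymbol l^*=\mathbf C^T(\mathbf C\mathbf C^T)^{-1}\mathbf C\bar{\boldsymbol l}$ (minimizer of $\tfrac12\boldsymbol l^T\boldsymbol l$ subject to $\mathbf C\boldsymbol l=\mathbf C\bar{\boldsymbol l}$), $\mathbf S=\mathbf C^T(\mathbf C\mathbf C^T)^{-1}\mathbf C-\mathbf I$ and $\Delta\boldsymbol l=\mathbf S\bar{\boldsymbol l}$. Let $I$ be uniform on the $M$ springs, independent of everything else, and write $\Delta l:=\Delta l_I$, $\bar l:=\bar l_I$; all variances/conditional variances above refer to these random variables (e.g. $\operatorname{Var}(\Delta l\mid\mathbf S)=\frac1M\sum_i\operatorname{Var}(\Delta l_i\mid \mathbf S)$ since each $\Delta l_i$ has mean zero), and $\mathbb E_{\bar l}[\operatorname{Var}(\Delta l\mid\bar l)]=\int_{-1/2}^{1/2}\operatorname{Var}(\Delta l\mid\bar l=\bar\ell)\,d\bar\ell$. *)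

theory Defs
  imports "HOL-Probability.Probability"
begin

type_synonym edge = "nat \<times> nat"

text \<open>Nodes are 0..N-1 (paper's node k is our node k-1). A spring joining nodes a<b is
  the pair (a,b), oriented from a to b.\<close>

definition ring_edges :: "nat \<Rightarrow> edge set" where
  "ring_edges N = {(k, k + 1) | k. k + 1 < N} \<union> {(0, N - 1)}"

definition valid_net :: "nat \<Rightarrow> nat \<Rightarrow> edge set \<Rightarrow> bool" where
  "valid_net N M E \<longleftrightarrow> E \<subseteq> {(a, b). a < b \<and> b < N} \<and> ring_edges N \<subseteq> E \<and> card E = M"

definition und :: "edge set \<Rightarrow> (nat \<times> nat) set" where
  "und T = {(a, b). (a, b) \<in> T \<or> (b, a) \<in> T}"

definition spanning_tree :: "nat \<Rightarrow> edge set \<Rightarrow> edge set \<Rightarrow> bool" where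
  "spanning_tree N E T \<longleftrightarrow> T \<subseteq> E \<and> card T = N - 1 \<and>
     (\<forall>u < N. \<forall>v < N. (u, v) \<in> (und T)\<^sup>*)"

definition inc :: "nat \<Rightarrow> edge \<Rightarrow> real" where
  "inc v e = (if v = snd e then 1 else if v = fst e then -1 else 0)"

text \<open>Signed cycle matrix w.r.t. spanning tree T: the rows are indexed by the non-tree
  edges f \<in> E - T; row f is the signed fundamental cycle of T + f, i.e. a
  {-1,0,1}-vector supported on T \<union> {f}, nonzero at f (either orientation), which is
  a closed cycle (zero signed sum at every node).\<close>
definition signed_cycle_matrix :: "nat \<Rightarrow> edge set \<Rightarrow> edge set \<Rightarrow> (edge \<Rightarrow> edge \<Rightarrow> real) \<Rightarrow> bool" where
  "signed_cycle_matrix N E T C \<longleftrightarrow> spanning_tree N E T \<and>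
     (\<forall>f \<in> E - T. (\<forall>e. C f e \<in> {-1, 0, 1}) \<and> (\<forall>e. e \<notin> T \<union> {f} \<longrightarrow> C f e = 0) \<and>
        C f f \<noteq> 0 \<and> (\<forall>v < N. (\<Sum>e\<in>E. C f e * inc v e) = 0))"

text \<open>Representative of t mod 1 in [-1/2, 1/2).\<close>
definition wrap :: "real \<Rightarrow> real" where
  "wrap t = t - of_int \<lfloor>t + 1/2\<rfloor>"

definition slen :: "(nat \<Rightarrow> real) \<Rightarrow> edge \<Rightarrow> real" where
  "slen x e = wrap (x (snd e) - x (fst e))"

definition feasible :: "edge set \<Rightarrow> edge set \<Rightarrow> (edge \<Rightarrow> edge \<Rightarrow> real) \<Rightarrow> (edge \<Rightarrow> real) \<Rightarrow> (edge \<Rightarrow> real) set" where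
  "feasible E R C lb = {l. (\<forall>e. e \<notin> E \<longrightarrow> l e = 0) \<and>
      (\<forall>r \<in> R. (\<Sum>e\<in>E. C r e * l e) = (\<Sum>e\<in>E. C r e * lb e))}"

definition relaxed :: "edge set \<Rightarrow> edge set \<Rightarrow> (edge \<Rightarrow> edge \<Rightarrow> real) \<Rightarrow> (edge \<Rightarrow> real) \<Rightarrow> (edge \<Rightarrow> real)" where
  "relaxed E R C lb = (THE l. l \<in> feasible E R C lb \<and>
      (\<forall>l' \<in> feasible E R C lb. (\<Sum>e\<in>E. (l e)\<^sup>2 / 2) \<le> (\<Sum>e\<in>E. (l' e)\<^sup>2 / 2)))"

definition dl :: "edge set \<Rightarrow> edge set \<Rightarrow> (edge \<Rightarrow> edge \<Rightarrow> real) \<Rightarrow> edge \<Rightarrow> (nat \<Rightarrow> real) \<Rightarrow> real" where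
  "dl E R C i x = relaxed E R C (slen x) i - slen x i"

text \<open>Node positions: i.i.d. uniform on [0,1) (representatives of R/Z).\<close>
definition posM :: "nat \<Rightarrow> (nat \<Rightarrow> real) measure" where
  "posM N = PiM {..<N} (\<lambda>_. uniform_measure lborel {0..<1})"

definition graph_spring :: "edge set pmf \<Rightarrow> (edge set \<times> edge) pmf" where
  "graph_spring G = bind_pmf G (\<lambda>E. map_pmf (\<lambda>i. (E, i)) (pmf_of_set E))"

definition ens :: "nat \<Rightarrow> edge set pmf \<Rightarrow> ((edge set \<times> edge) \<times> (nat \<Rightarrow> real)) measure" where
  "ens N G = measure_pmf (graph_spring G) \<Otimes>\<^sub>M posM N"

definition cond_ens :: "nat \<Rightarrow> edge set \<Rightarrow> (edge \<times> (nat \<Rightarrow> real)) measure" where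
  "cond_ens N E = measure_pmf (pmf_of_set E) \<Otimes>\<^sub>M posM N"

definition lbarRV :: "(edge set \<times> edge) \<times> (nat \<Rightarrow> real) \<Rightarrow> real" where
  "lbarRV \<omega> = slen (snd \<omega>) (snd (fst \<omega>))"

definition dlRV :: "(edge set \<Rightarrow> edge set) \<Rightarrow> (edge set \<Rightarrow> edge \<Rightarrow> edge \<Rightarrow> real) \<Rightarrow>
    (edge set \<times> edge) \<times> (nat \<Rightarrow> real) \<Rightarrow> real" where
  "dlRV T C \<omega> = (let E = fst (fst \<omega>) in dl E (E - T E) (C E) (snd (fst \<omega>)) (snd \<omega>))"

definition Var :: "'a measure \<Rightarrow> ('a \<Rightarrow> real) \<Rightarrow> real" where
  "Var M X = (\<integral>\<omega>. (X \<omega> - (\<integral>\<omega>'. X \<omega>' \<partial>M))\<^sup>2 \<partial>M)"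

definition cond_Var :: "'a measure \<Rightarrow> 'a measure \<Rightarrow> ('a \<Rightarrow> real) \<Rightarrow> ('a \<Rightarrow> real)" where
  "cond_Var M F X = real_cond_exp M F (\<lambda>\<omega>. (X \<omega> - real_cond_exp M F X \<omega>)\<^sup>2)"

end

theory Submission
  imports Defs
begin


definition ip :: "edge set \<Rightarrow> (edge \<Rightarrow> real) \<Rightarrow> (edge \<Rightarrow> real) \<Rightarrow> real" where
  "ip E f g = (\<Sum>e\<in>E. f e * g e)"

fun gs :: "edge set \<Rightarrow> (edge \<Rightarrow> real) list \<Rightarrow> (edge \<Rightarrow> real) \<Rightarrow> (edge \<Rightarrow> real)" where
  "gs E [] l = (\<lambda>e. 0)"
| "gs E (v # vs) l = (let u = (\<lambda>e. v e - gs E vs v e) in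
     if ip E u u = 0 then gs E vs l else (\<lambda>e. gs E vs l e + ip E u l / ip E u u * u e))"

lemma ip_sym: "ip E f g = ip E g f"
  unfolding ip_def by (simp add: mult.commute)

lemma ip_diff_left: "ip E (\<lambda>e. f e - g e) h = ip E f h - ip E g h"
  unfolding ip_def by (simp add: left_diff_distrib sum_subtractf)
lemma ip_diff_right: "ip E h (\<lambda>e. f e - g e) = ip E h f - ip E h g"
  unfolding ip_def by (simp add: right_diff_distrib sum_subtractf)
lemma ip_add_right: "ip E h (\<lambda>e. f e + g e) = ip E h f + ip E h g"
  unfolding ip_def by (simp add: distrib_left sum.distrib)
lemma ip_scale_right: "ip E h (\<lambda>e. c * g e) = c * ip E h g"
  unfolding ip_def by (simp add: sum_distrib_left mult.assoc mult.left_commute)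

lemma ip_scale_div: "ip E h (\<lambda>e. a * g e / b) = a * ip E h g / b"
  unfolding ip_def by (simp add: sum_distrib_left sum_divide_distrib mult.assoc mult.left_commute)

lemma ip_scale_left: "ip E (\<lambda>e. c * g e) h = c * ip E g h"
  unfolding ip_def by (simp add: sum_distrib_left mult.assoc)

lemma ip_self_zero:
  assumes "finite E" "ip E u u = 0" "e \<in> E" shows "u e = 0"
proof -
  have "(\<Sum>e\<in>E. u e * u e) = 0" using assms(2) by (simp add: ip_def)
  then have "\<forall>e\<in>E. u e * u e = 0" using assms(1)
    by (subst (asm) sum_nonneg_eq_0_iff) auto
  then show ?thesis using assms(3) by auto
qed

lemma ip_cong: "(\<And>e. e \<in> E \<Longrightarrow> f e = f' e) \<Longrightarrow> (\<And>e. e \<in> E \<Longrightarrow> g e = g' e) \<Longrightarrow> ip E f g = ip E f' g'"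
  unfolding ip_def by (rule sum.cong) auto

lemma gs_span:
  assumes "\<forall>v\<in>set vs. ip E w v = 0"
  shows "ip E w (gs E vs l) = 0"
  using assms
proof (induction vs arbitrary: l)
  case Nil then show ?case by (simp add: ip_def)
next
  case (Cons v vs)
  define u where "u = (\<lambda>e. v e - gs E vs v e)"
  have h1: "ip E w (gs E vs l) = 0" using Cons by auto
  have h2: "ip E w u = 0" unfolding u_def ip_diff_right using Cons by auto
  show ?case
    using h1 h2 by (simp add: u_def[symmetric] Let_def ip_add_right ip_scale_div)
qed

lemma gs_orth:
  assumes "finite E" "v' \<in> set vs"
  shows "ip E (\<lambda>e. l e - gs E vs l e) v' = 0"
  using assms(2)
proof (induction vs arbitrary: l v')
  case Nil then show ?case by simp
next
  case (Cons v vs)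
  define u where "u = (\<lambda>e. v e - gs E vs v e)"
  have IHall: "\<And>l v'. v' \<in> set vs \<Longrightarrow> ip E (\<lambda>e. l e - gs E vs l e) v' = 0" using Cons.IH by blast
  have sp: "\<And>w l. (\<forall>v\<in>set vs. ip E w v = 0) \<Longrightarrow> ip E w (gs E vs l) = 0" by (rule gs_span)
  show ?case
  proof (cases "ip E u u = 0")
    case True
    have gsv: "gs E (v # vs) l = gs E vs l" using True by (simp add: u_def[symmetric] Let_def)
    show ?thesis
    proof (cases "v' \<in> set vs")
      case True then show ?thesis using gsv IHall by simp
    next
      case False
      then have "v' = v" using Cons.prems by auto
      have "\<And>e. e \<in> E \<Longrightarrow> u e = 0" using True assms(1) ip_self_zero by blast
      then have "ip E (\<lambda>e. l e - gs E vs l e) v = ip E (\<lambda>e. l e - gs E vs l e) (gs E vs v)"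
        unfolding u_def by (intro ip_cong) auto
      also have "\<dots> = 0" by (rule sp) (use IHall in auto)
      finally show ?thesis using gsv \<open>v' = v\<close> by simp
    qed
  next
    case False
    define c where "c = ip E u l / ip E u u"
    have gsv: "gs E (v # vs) l = (\<lambda>e. gs E vs l e + c * u e)"
      using False by (simp add: u_def[symmetric] Let_def c_def)
    have uorth: "\<And>v'. v' \<in> set vs \<Longrightarrow> ip E u v' = 0" unfolding u_def using IHall by blast
    have eq: "(\<lambda>e. l e - gs E (v # vs) l e) = (\<lambda>e. (l e - gs E vs l e) - c * u e)"
      using gsv by auto
    show ?thesis
    proof (cases "v' \<in> set vs")
      case True
      have "ip E (\<lambda>e. (l e - gs E vs l e) - c * u e) v' = ip E (\<lambda>e. l e - gs E vs l e) v' - c * ip E u v'"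
        by (simp only: ip_diff_left ip_scale_left)
      then show ?thesis unfolding eq
        using IHall[OF True] uorth[OF True] by simp
    next
      case False
      then have "v' = v" using Cons.prems by auto
      have a1: "ip E (\<lambda>e. (l e - gs E vs l e) - c * u e) (gs E vs v) = 0"
      proof (rule sp, intro ballI)
        fix v'' assume "v'' \<in> set vs"
        then show "ip E (\<lambda>e. (l e - gs E vs l e) - c * u e) v'' = 0"
          using IHall uorth \<open>v'' \<in> set vs\<close> by (simp only: ip_diff_left ip_scale_left)
      qed
      have a2: "ip E (gs E vs l) u = 0" using sp[of u l] uorth ip_sym[of E "gs E vs l" u] by auto
      have a3: "ip E (\<lambda>e. (l e - gs E vs l e) - c * u e) u = 0"
      proof -
        have "ip E (\<lambda>e. (l e - gs E vs l e) - c * u e) u = ip E l u - ip E (gs E vs l) u - c * ip E u u"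
          by (simp only: ip_diff_left ip_scale_left)
        also have "\<dots> = 0" using a2 \<open>ip E u u \<noteq> 0\<close> unfolding c_def by (simp add: ip_sym[of E l u])
        finally show ?thesis .
      qed
      have "ip E (\<lambda>e. (l e - gs E vs l e) - c * u e) v = ip E (\<lambda>e. (l e - gs E vs l e) - c * u e) (\<lambda>e. u e + gs E vs v e)"
        by (rule ip_cong) (auto simp: u_def)
      also have "\<dots> = 0" by (simp only: ip_add_right a1 a3)
      finally have "ip E (\<lambda>e. (l e - gs E vs l e) - c * u e) v = 0" .
      then show ?thesis unfolding eq \<open>v' = v\<close> .
    qed
  qed
qed

definition dlt :: "edge \<Rightarrow> edge \<Rightarrow> real" where
  "dlt j = (\<lambda>e. if e = j then 1 else 0)"

lemma ip_dlt: "finite E \<Longrightarrow> j \<in> E \<Longrightarrow> ip E u (dlt j) = u j"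
  unfolding ip_def dlt_def by (simp add: if_distrib[where f="\<lambda>x. _ * x"] cong: if_cong)

lemma ip_dlt_left: "finite E \<Longrightarrow> j \<in> E \<Longrightarrow> ip E (dlt j) u = u j"
  using ip_dlt ip_sym by metis

lemma gs_linear:
  assumes "finite E"
  shows "gs E vs l e = (\<Sum>j\<in>E. l j * gs E vs (dlt j) e)"
proof (induction vs arbitrary: e)
  case Nil then show ?case by simp
next
  case (Cons v vs)
  define u where "u = (\<lambda>e. v e - gs E vs v e)"
  show ?case
  proof (cases "ip E u u = 0")
    case True
    then show ?thesis using Cons by (simp add: u_def[symmetric] Let_def)
  next
    case False
    have "(\<Sum>j\<in>E. l j * gs E (v # vs) (dlt j) e)
        = (\<Sum>j\<in>E. l j * gs E vs (dlt j) e + l j * u j * u e / ip E u u)"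
      using False by (intro sum.cong) (auto simp: u_def[symmetric] Let_def ip_dlt assms distrib_left)
    also have "\<dots> = gs E vs l e + (\<Sum>j\<in>E. l j * u j) * u e / ip E u u"
      using Cons by (simp add: sum.distrib sum_divide_distrib sum_distrib_right)
    also have "\<dots> = gs E (v # vs) l e"
      using False by (simp add: u_def[symmetric] Let_def ip_def mult.commute)
    finally show ?thesis by simp
  qed
qed

lemma gs_trace:
  assumes "finite E" "distinct (map fst rs)" "\<forall>(r, v)\<in>set rs. r \<in> E \<and> v r \<noteq> 0"
    "\<forall>(r, v)\<in>set rs. \<forall>(r', v')\<in>set rs. r' \<noteq> r \<longrightarrow> v' r = 0"
  shows "(\<Sum>j\<in>E. gs E (map snd rs) (dlt j) j) = real (length rs)"
  using assms(2-4)
proof (induction rs)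
  case Nil then show ?case by simp
next
  case (Cons rv rs)
  obtain r v where rv: "rv = (r, v)" by fastforce
  define vs where "vs = map snd rs"
  define u where "u = (\<lambda>e. v e - gs E vs v e)"
  have p3: "\<forall>(r, v)\<in>set rs. \<forall>(r', v')\<in>set rs. r' \<noteq> r \<longrightarrow> v' r = 0"
    using Cons.prems(3) by fastforce
  have IH: "(\<Sum>j\<in>E. gs E vs (dlt j) j) = real (length rs)"
    using Cons.IH Cons.prems(1,2) p3 unfolding vs_def by auto
  have rE: "r \<in> E" and vr: "v r \<noteq> 0" using Cons.prems rv by auto
  have "\<forall>v'\<in>set vs. ip E (dlt r) v' = 0"
  proof
    fix v' assume "v' \<in> set vs"
    then obtain r' where "(r', v') \<in> set rs" unfolding vs_def by auto
    moreover then have "r' \<noteq> r" using Cons.prems(1) rv by force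
    ultimately have "v' r = 0" using Cons.prems(3) rv by fastforce
    then show "ip E (dlt r) v' = 0" using ip_dlt_left[OF assms(1) rE] by simp
  qed
  then have "ip E (dlt r) (gs E vs v) = 0" by (rule gs_span)
  then have "gs E vs v r = 0" using ip_dlt_left[OF assms(1) rE] by simp
  then have ur: "u r \<noteq> 0" using vr unfolding u_def by simp
  have nz: "ip E u u \<noteq> 0" using ip_self_zero[OF assms(1) _ rE] ur by blast
  have "(\<Sum>j\<in>E. gs E (v # vs) (dlt j) j) = (\<Sum>j\<in>E. gs E vs (dlt j) j + u j * u j / ip E u u)"
    using nz by (intro sum.cong) (auto simp: u_def[symmetric] Let_def ip_dlt assms(1))
  also have "\<dots> = real (length rs) + ip E u u / ip E u u"
    using IH by (simp add: sum.distrib sum_divide_distrib[symmetric] ip_def)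
  also have "\<dots> = real (length (rv # rs))" using nz by simp
  finally show ?case by (simp add: rv vs_def)
qed

lemma gs_resid_norm:
  assumes "finite E" "j \<in> E"
  shows "(\<Sum>i\<in>E. (dlt j i - gs E vs (dlt j) i)\<^sup>2) = 1 - gs E vs (dlt j) j"
proof -
  define x where "x = (\<lambda>i. dlt j i - gs E vs (dlt j) i)"
  have o: "ip E x (gs E vs (dlt j)) = 0"
    by (rule gs_span) (use gs_orth[OF assms(1)] in \<open>auto simp: x_def\<close>)
  have "(\<Sum>i\<in>E. (dlt j i - gs E vs (dlt j) i)\<^sup>2) = ip E x x"
    by (simp add: ip_def x_def power2_eq_square)
  also have "\<dots> = ip E x (dlt j) - ip E x (gs E vs (dlt j))"
    by (subst (2) x_def) (simp only: ip_diff_right)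
  also have "\<dots> = 1 - gs E vs (dlt j) j"
    using o ip_dlt[OF assms] by (simp add: x_def dlt_def)
  finally show ?thesis .
qed

lemma relaxed_gs:
  assumes "finite E" "set rs = R" "distinct rs"
  shows "relaxed E R C lb = (\<lambda>e. if e \<in> E then gs E (map C rs) lb e else 0)"
proof -
  define vs where "vs = map C rs"
  define ls where "ls = (\<lambda>e. if e \<in> E then gs E vs lb e else 0)"
  have ipE: "\<And>r l. (\<Sum>e\<in>E. C r e * l e) = ip E (C r) l" by (simp add: ip_def)
  have feas: "ls \<in> feasible E R C lb"
    unfolding feasible_def
  proof (safe)
    fix e assume "e \<notin> E" then show "ls e = 0" by (simp add: ls_def)
  next
    fix r assume "r \<in> R"
    then have "C r \<in> set vs" using assms(2) by (auto simp: vs_def)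
    then have "ip E (\<lambda>e. lb e - gs E vs lb e) (C r) = 0" by (rule gs_orth[OF assms(1)])
    then have "ip E (C r) lb = ip E (C r) ls"
      by (simp add: ip_diff_left ip_sym[of E _ "C r"]) (simp add: ip_def ls_def)
    then show "(\<Sum>e\<in>E. C r e * ls e) = (\<Sum>e\<in>E. C r e * lb e)" by (simp add: ipE)
  qed
  have key: "(\<Sum>e\<in>E. (l e)\<^sup>2 / 2) = (\<Sum>e\<in>E. (ls e)\<^sup>2 / 2) + (\<Sum>e\<in>E. (l e - ls e)\<^sup>2 / 2)"
    if l: "l \<in> feasible E R C lb" for l
  proof -
    define d where "d = (\<lambda>e. l e - ls e)"
    have "\<forall>v\<in>set vs. ip E d v = 0"
    proof
      fix v assume "v \<in> set vs"
      then obtain r where r: "r \<in> R" "v = C r" using assms(2) by (auto simp: vs_def)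
      have "ip E (C r) l = ip E (C r) lb" using l r unfolding feasible_def by (simp add: ipE)
      moreover have "ip E (C r) ls = ip E (C r) lb" using feas r unfolding feasible_def by (simp add: ipE)
      ultimately show "ip E d v = 0" by (simp add: d_def r ip_diff_right ip_sym[of E _ "C r"])
    qed
    then have "ip E d (gs E vs lb) = 0" by (rule gs_span)
    then have "ip E d ls = 0" by (simp add: ip_def ls_def)
    then have z0: "(\<Sum>e\<in>E. d e * ls e) = 0" by (simp add: ip_def)
    have eqn: "\<And>e. (l e)\<^sup>2 / 2 = (ls e)\<^sup>2 / 2 + d e * ls e + (l e - ls e)\<^sup>2 / 2"
      by (simp add: d_def power2_eq_square field_simps)
    have "(\<Sum>e\<in>E. (l e)\<^sup>2 / 2) = (\<Sum>e\<in>E. (ls e)\<^sup>2 / 2 + d e * ls e + (l e - ls e)\<^sup>2 / 2)"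
      by (rule sum.cong[OF refl], rule eqn)
    also have "\<dots> = (\<Sum>e\<in>E. (ls e)\<^sup>2 / 2) + (\<Sum>e\<in>E. d e * ls e) + (\<Sum>e\<in>E. (l e - ls e)\<^sup>2 / 2)"
      by (simp only: sum.distrib)
    finally have "(\<Sum>e\<in>E. (l e)\<^sup>2 / 2) = (\<Sum>e\<in>E. (ls e)\<^sup>2 / 2) + (\<Sum>e\<in>E. d e * ls e) + (\<Sum>e\<in>E. (l e - ls e)\<^sup>2 / 2)" .
    then show ?thesis using z0 by simp
  qed
  have "relaxed E R C lb = ls"
    unfolding relaxed_def
  proof (rule the_equality)
    show "ls \<in> feasible E R C lb \<and> (\<forall>l'\<in>feasible E R C lb. (\<Sum>e\<in>E. (ls e)\<^sup>2 / 2) \<le> (\<Sum>e\<in>E. (l' e)\<^sup>2 / 2))"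
    proof (intro conjI ballI)
      show "ls \<in> feasible E R C lb" by (rule feas)
    next
      fix l' assume "l' \<in> feasible E R C lb"
      from key[OF this] show "(\<Sum>e\<in>E. (ls e)\<^sup>2 / 2) \<le> (\<Sum>e\<in>E. (l' e)\<^sup>2 / 2)"
        by (smt (verit) sum_nonneg zero_le_power2 divide_nonneg_pos)
    qed
  next
    fix l assume "l \<in> feasible E R C lb \<and> (\<forall>l'\<in>feasible E R C lb. (\<Sum>e\<in>E. (l e)\<^sup>2 / 2) \<le> (\<Sum>e\<in>E. (l' e)\<^sup>2 / 2))"
    then have l: "l \<in> feasible E R C lb" and le: "(\<Sum>e\<in>E. (l e)\<^sup>2 / 2) \<le> (\<Sum>e\<in>E. (ls e)\<^sup>2 / 2)"
      using feas by auto
    have "(\<Sum>e\<in>E. (l e - ls e)\<^sup>2 / 2) = 0"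
      using key[OF l] le sum_nonneg[of E "\<lambda>e. (l e - ls e)\<^sup>2 / 2"] by simp
    then have "\<forall>e\<in>E. (l e - ls e)\<^sup>2 / 2 = 0"
      using assms(1) by (subst (asm) sum_nonneg_eq_0_iff) auto
    then have "\<forall>e\<in>E. l e = ls e" by auto
    moreover have "\<forall>e. e \<notin> E \<longrightarrow> l e = 0" using l by (simp add: feasible_def)
    ultimately show "l = ls" by (auto simp: ls_def)
  qed
  then show ?thesis unfolding ls_def vs_def .
qed


abbreviation U :: "real measure" where "U \<equiv> uniform_measure lborel {0..<1}"

lemma U_density: "U = density lborel (\<lambda>x. ennreal (indicator {0..<1} x))"
  unfolding uniform_measure_def by (simp add: ennreal_indicator divide_ennreal_def)

lemma prob_U: "prob_space U"
  by (rule prob_space_uniform_measure) auto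

lemma sets_U[simp]: "sets U = sets borel" by simp
lemma space_U[simp]: "space U = UNIV" by simp

lemma integral_U:
  fixes f :: "real \<Rightarrow> real"
  assumes "f \<in> borel_measurable borel"
  shows "(\<integral>y. f y \<partial>U) = (\<integral>y. indicator {0..<1} y * f y \<partial>lborel)"
  unfolding U_density
  by (subst integral_density) (use assms in auto)

lemma wrap_int: "wrap (t + real_of_int k) = wrap t"
  unfolding wrap_def
proof -
  have "\<lfloor>t + real_of_int k + 1 / 2\<rfloor> = \<lfloor>t + 1/2\<rfloor> + k"
    by (metis add.commute add.left_commute floor_add_int)
  then show "t + real_of_int k - real_of_int \<lfloor>t + real_of_int k + 1 / 2\<rfloor> = t - real_of_int \<lfloor>t + 1 / 2\<rfloor>"
    by simp
qed

lemma wrap_bounds: "- 1/2 \<le> wrap t" "wrap t < 1/2"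
  unfolding wrap_def
  using floor_correct[of "t + 1/2"] by linarith+

lemma abs_wrap: "\<bar>wrap t\<bar> \<le> 1/2"
  using wrap_bounds[of t] by auto

lemma wrap_id: "- 1/2 \<le> t \<Longrightarrow> t < 1/2 \<Longrightarrow> wrap t = t"
  unfolding wrap_def
proof -
  assume "- 1/2 \<le> t" "t < 1/2"
  then have "\<lfloor>t + 1/2\<rfloor> = 0" by (intro floor_unique) auto
  then show "t - real_of_int \<lfloor>t + 1 / 2\<rfloor> = t" by simp
qed

lemma wrap_measurable[measurable]: "wrap \<in> borel_measurable borel"
  unfolding wrap_def by measurable

locale perF =
  fixes F :: "real \<Rightarrow> real" and K :: real
  assumes Fm[measurable]: "F \<in> borel_measurable borel"
    and Fb: "\<And>t. \<bar>F t\<bar> \<le> K"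
    and Fp: "\<And>t k. F (t + real_of_int k) = F t"
begin

lemma intF: "A \<in> sets borel \<Longrightarrow> emeasure lborel A < \<infinity> \<Longrightarrow> integrable lborel (\<lambda>x. indicator A x * F x)"
proof -
  assume "A \<in> sets borel" "emeasure lborel A < \<infinity>"
  then have "integrable lborel (\<lambda>x. K * indicator A x)" by simp
  then show ?thesis
  proof (rule Bochner_Integration.integrable_bound[OF _ _ AE_I2])
    show "(\<lambda>x. indicator A x * F x) \<in> borel_measurable lborel" using \<open>A \<in> sets borel\<close> by measurable
    fix x
    have "\<bar>F x\<bar> \<le> \<bar>K\<bar>" using Fb[of x] by linarith
    then show "norm (indicator A x * F x) \<le> norm (K * indicator A x)"
      by (auto simp: indicator_def)
  qed
qed

lemma intF_Ico: "integrable lborel (\<lambda>x. indicator {a..<b} x * F x)"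
  by (rule intF, simp, rule emeasure_bounded_finite) (meson bounded_subset bounded_closed_interval atLeastLessThan_subseteq_atLeastAtMost_iff order_refl)

definition II :: "real \<Rightarrow> real" where
  "II a = (\<integral>x. indicator {a..<a+1} x * F x \<partial>lborel)"

lemma shift: "(\<integral>x. g x \<partial>lborel) = (\<integral>y. g (c + y) \<partial>lborel)" for g :: "real \<Rightarrow> real"
  using lborel_integral_real_affine[of 1 g c] by simp

lemma II_shift: "II a = (\<integral>y. indicator {0..<1} y * F (y + a) \<partial>lborel)"
  unfolding II_def
  by (subst shift[of _ a]) (auto intro!: Bochner_Integration.integral_cong simp: indicator_def add.commute)

lemma II_const: "II a = II 0"
proof -
  define k where "k = real_of_int \<lfloor>a\<rfloor>"
  have k1: "k \<le> a" "a < k + 1" unfolding k_def by linarith+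
  have "II a = (\<integral>x. indicator {a..<k+1} x * F x + indicator {k+1..<a+1} x * F x \<partial>lborel)"
    unfolding II_def using k1
    by (intro Bochner_Integration.integral_cong) (auto simp: indicator_def)
  also have "\<dots> = (\<integral>x. indicator {a..<k+1} x * F x \<partial>lborel) + (\<integral>x. indicator {k+1..<a+1} x * F x \<partial>lborel)"
    by (intro Bochner_Integration.integral_add intF_Ico)
  also have "(\<integral>x. indicator {k+1..<a+1} x * F x \<partial>lborel) = (\<integral>x. indicator {k..<a} x * F x \<partial>lborel)"
  proof -
    have "(\<integral>x. indicator {k+1..<a+1} x * F x \<partial>lborel) = (\<integral>y. indicator {k+1..<a+1} (1 + y) * F (1 + y) \<partial>lborel)"
      by (rule shift)
    also have "\<dots> = (\<integral>y. indicator {k..<a} y * F y \<partial>lborel)"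
      using Fp[of _ 1] by (intro Bochner_Integration.integral_cong) (auto simp: indicator_def add.commute)
    finally show ?thesis .
  qed
  also have "(\<integral>x. indicator {a..<k+1} x * F x \<partial>lborel) + (\<integral>x. indicator {k..<a} x * F x \<partial>lborel)
      = (\<integral>x. indicator {a..<k+1} x * F x + indicator {k..<a} x * F x \<partial>lborel)"
    by (intro Bochner_Integration.integral_add[symmetric] intF_Ico)
  also have "\<dots> = II k"
    unfolding II_def using k1
    by (intro Bochner_Integration.integral_cong) (auto simp: indicator_def)
  also have "II k = II 0"
    unfolding II_shift using Fp[of _ "\<lfloor>a\<rfloor>"] by (simp add: k_def)
  finally show ?thesis .
qed

lemma transl: "(\<integral>y. F (y + c) \<partial>U) = (\<integral>y. F y \<partial>U)"
proof -
  have "(\<integral>y. F (y + c) \<partial>U) = II c" by (simp add: integral_U II_shift)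
  also have "\<dots> = II 0" by (rule II_const)
  also have "\<dots> = (\<integral>y. F y \<partial>U)" by (simp add: integral_U II_shift)
  finally show ?thesis .
qed

lemma refl: "(\<integral>y. F (c - y) \<partial>U) = (\<integral>y. F y \<partial>U)"
proof -
  have "(\<integral>y. F (c - y) \<partial>U) = (\<integral>y. indicator {0..<1} y * F (c - y) \<partial>lborel)"
    by (simp add: integral_U)
  also have "\<dots> = (\<integral>x. indicator {c-1<..c} x * F x \<partial>lborel)"
  proof -
    have "(\<integral>x. indicator {c-1<..c} x * F x \<partial>lborel) = (\<integral>x. indicator {c-1<..c} (c + -1 * x) * F (c + -1 * x) \<partial>lborel)"
      using lborel_integral_real_affine[of "-1" "\<lambda>x. indicator {c-1<..c} x * F x" c] by simp
    also have "\<dots> = (\<integral>y. indicator {0..<1} y * F (c - y) \<partial>lborel)"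
      by (intro Bochner_Integration.integral_cong) (auto simp: indicator_def)
    finally show ?thesis by simp
  qed
  also have "\<dots> = (\<integral>x. indicator {c-1..<c-1+1} x * F x \<partial>lborel)"
  proof (rule integral_cong_AE)
    show "AE x in lborel. indicator {c - 1<..c} x * F x = indicator {c-1..<c-1+1} x * F x"
      using AE_lborel_singleton[of "c-1"] AE_lborel_singleton[of c]
      by eventually_elim (auto simp: indicator_def)
  qed auto
  also have "\<dots> = II (c - 1)" by (simp add: II_def)
  also have "\<dots> = II 0" by (rule II_const)
  also have "\<dots> = (\<integral>y. F y \<partial>U)" by (simp add: integral_U II_shift)
  finally show ?thesis .
qed

lemma center: "(\<integral>y. F y \<partial>U) = (\<integral>x. indicator {-1/2..<1/2} x * F x \<partial>lborel)"
proof -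
  have "(\<integral>y. F y \<partial>U) = II 0" by (simp add: integral_U II_shift)
  also have "\<dots> = II (-1/2)" by (rule II_const[symmetric])
  finally show ?thesis by (simp add: II_def)
qed

end

lemma perF_wrap:
  fixes h :: "real \<Rightarrow> real"
  assumes [measurable]: "h \<in> borel_measurable borel" and hb: "\<And>u. \<bar>u\<bar> \<le> 1/2 \<Longrightarrow> \<bar>h u\<bar> \<le> K"
  shows "perF (\<lambda>t. h (wrap t)) K"
proof
  show "(\<lambda>t. h (wrap t)) \<in> borel_measurable borel" by measurable
  show "\<bar>h (wrap t)\<bar> \<le> K" for t using hb abs_wrap by blast
  show "h (wrap (t + real_of_int k)) = h (wrap t)" for t k by (simp add: wrap_int)
qed

lemma center_h:
  fixes h :: "real \<Rightarrow> real"
  assumes [measurable]: "h \<in> borel_measurable borel" and hb: "\<And>u. \<bar>u\<bar> \<le> 1/2 \<Longrightarrow> \<bar>h u\<bar> \<le> K"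
  shows "(\<integral>y. h (wrap y) \<partial>U) = (\<integral>x. indicator {-1/2..1/2} x * h x \<partial>lborel)"
proof -
  interpret perF "\<lambda>t. h (wrap t)" K by (rule perF_wrap) (use hb in auto)
  have "(\<integral>y. h (wrap y) \<partial>U) = (\<integral>x. indicator {-1/2..<1/2} x * h (wrap x) \<partial>lborel)" by (rule center)
  also have "\<dots> = (\<integral>x. indicator {-1/2..1/2} x * h x \<partial>lborel)"
  proof (rule integral_cong_AE)
    show "AE x in lborel. indicator {-1/2..<1/2} x * h (wrap x) = indicator {-1/2..1/2} x * h x"
      using AE_lborel_singleton[of "1/2"]
      by eventually_elim (auto simp: indicator_def wrap_id)
  qed auto
  finally show ?thesis .
qed

lemma U_wrap0: "(\<integral>y. wrap y \<partial>U) = 0"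
proof -
  have "(\<integral>y. wrap y \<partial>U) = (\<integral>x. indicator {-1/2..1/2} x * x \<partial>lborel)"
    by (rule center_h[where K="1/2"]) auto
  also have "\<dots> = (\<integral>x. indicator {-1/2..1/2} x *\<^sub>R x \<partial>lborel)" by simp
  also have "\<dots> = (1/2)\<^sup>2 / 2 - (-1/2)\<^sup>2 / 2"
    by (rule integral_FTC_atLeastAtMost[where F="\<lambda>x. x\<^sup>2 / 2"])
       (auto intro!: derivative_eq_intros continuous_intros simp: has_real_derivative_iff_has_vector_derivative[symmetric])
  finally show ?thesis by simp
qed

lemma sq_bound: "\<bar>u::real\<bar> \<le> 1/2 \<Longrightarrow> \<bar>u\<^sup>2\<bar> \<le> 1/4"
proof -
  assume a: "\<bar>u\<bar> \<le> 1/2"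
  have "\<bar>u\<bar>\<^sup>2 \<le> (1/2)\<^sup>2" using a by (intro power_mono) auto
  then show ?thesis by (simp add: power_abs power2_eq_square)
qed

lemma U_wrap2: "(\<integral>y. (wrap y)\<^sup>2 \<partial>U) = 1/12"
proof -
  have "(\<integral>y. (wrap y)\<^sup>2 \<partial>U) = (\<integral>x. indicator {-1/2..1/2} x * x\<^sup>2 \<partial>lborel)"
    by (rule center_h[where K="1/4"], simp, erule sq_bound)
  also have "\<dots> = (\<integral>x. indicator {-1/2..1/2} x *\<^sub>R x\<^sup>2 \<partial>lborel)" by simp
  also have "\<dots> = (1/2)^3 / 3 - (-1/2)^3 / 3"
    by (rule integral_FTC_atLeastAtMost[where F="\<lambda>x. x^3 / 3"])
       (auto intro!: derivative_eq_intros continuous_intros simp: has_real_derivative_iff_has_vector_derivative[symmetric])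
  finally show ?thesis by (simp add: power3_eq_cube)
qed


definition UE :: "nat \<Rightarrow> edge set" where "UE N = {(a, b). a < b \<and> b < N}"

lemma prob_posM: "prob_space (posM N)"
  unfolding posM_def by (rule prob_space_PiM) (rule prob_U)

lemma prob_PiU: "prob_space (PiM I (\<lambda>_. U))"
  by (rule prob_space_PiM) (rule prob_U)

lemma slen_meas[measurable]:
  assumes "j \<in> UE N"
  shows "(\<lambda>x. slen x j) \<in> borel_measurable (posM N)"
proof -
  obtain a b where j: "j = (a, b)" "a < b" "b < N" using assms by (auto simp: UE_def)
  have [measurable]: "(\<lambda>x. x a) \<in> borel_measurable (posM N)" "(\<lambda>x. x b) \<in> borel_measurable (posM N)"
    unfolding posM_def using j
    by (auto intro!: measurable_component_singleton[where M="\<lambda>_. U", simplified])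
  show ?thesis unfolding slen_def j by simp
qed

lemma sets_posM: "sets (posM N) = sets (PiM {..<N} (\<lambda>_. U))" by (simp add: posM_def)

lemma fubini_node:
  fixes f :: "(nat \<Rightarrow> real) \<Rightarrow> real"
  assumes "w < N" "integrable (posM N) f"
  shows "(\<integral>x. f x \<partial>posM N) = (\<integral>x. (\<integral>y. f (x(w:=y)) \<partial>U) \<partial>PiM ({..<N} - {w}) (\<lambda>_. U))"
proof -
  interpret product_prob_space "\<lambda>_::nat. U" by (rule product_prob_spaceI) (rule prob_U)
  have I: "insert w ({..<N} - {w}) = {..<N}" using assms(1) by auto
  show ?thesis
    using product_integral_insert[of "{..<N} - {w}" w f] assms(2) unfolding posM_def I by simp
qed

lemma U_transl_h:
  fixes h :: "real \<Rightarrow> real"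
  assumes [measurable]: "h \<in> borel_measurable borel" and hb: "\<And>u. \<bar>u\<bar> \<le> 1/2 \<Longrightarrow> \<bar>h u\<bar> \<le> K"
  shows "(\<integral>y. h (wrap (y + c)) \<partial>U) = (\<integral>y. h (wrap y) \<partial>U)"
proof -
  interpret perF "\<lambda>t. h (wrap t)" K by (rule perF_wrap) (use hb in auto)
  show ?thesis by (rule transl)
qed

lemma U_refl_h:
  fixes h :: "real \<Rightarrow> real"
  assumes [measurable]: "h \<in> borel_measurable borel" and hb: "\<And>u. \<bar>u\<bar> \<le> 1/2 \<Longrightarrow> \<bar>h u\<bar> \<le> K"
  shows "(\<integral>y. h (wrap (c - y)) \<partial>U) = (\<integral>y. h (wrap y) \<partial>U)"
proof -
  interpret perF "\<lambda>t. h (wrap t)" K by (rule perF_wrap) (use hb in auto)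
  show ?thesis by (rule refl)
qed

lemma U_wrap_transl: "(\<integral>y. wrap (y + c) \<partial>U) = 0"
  using U_transl_h[of "\<lambda>u. u" "1/2" c] U_wrap0 by simp

lemma U_wrap_refl: "(\<integral>y. wrap (c - y) \<partial>U) = 0"
  using U_refl_h[of "\<lambda>u. u" "1/2" c] U_wrap0 by simp

lemma key:
  fixes g :: "real \<Rightarrow> real"
  assumes jk: "j \<in> UE N" "k \<in> UE N" and [measurable]: "g \<in> borel_measurable borel"
    and gb: "\<And>u. \<bar>u\<bar> \<le> 1/2 \<Longrightarrow> \<bar>g u\<bar> \<le> K"
  shows "(\<integral>x. slen x j * g (slen x k) \<partial>posM N) = (if j = k then (\<integral>y. wrap y * g (wrap y) \<partial>U) else 0)"
proof -
  interpret P: prob_space "posM N" by (rule prob_posM)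
  have K0: "0 \<le> K" using gb[of 0] by simp
  have bnd: "\<bar>u * g v\<bar> \<le> 1/2 * K" if "\<bar>u\<bar> \<le> 1/2" "\<bar>v\<bar> \<le> 1/2" for u v
    unfolding abs_mult by (rule mult_mono) (use that gb K0 in auto)
  have int: "integrable (posM N) (\<lambda>x. slen x j * g (slen x k))"
  proof (rule P.integrable_const_bound[where B="1/2 * K"])
    show "AE x in posM N. norm (slen x j * g (slen x k)) \<le> 1/2 * K"
      by (intro AE_I2, unfold real_norm_def slen_def, rule bnd[OF abs_wrap abs_wrap])
    show "(\<lambda>x. slen x j * g (slen x k)) \<in> borel_measurable (posM N)"
      using jk by measurable
  qed
  obtain a b where j: "j = (a, b)" "a < b" "b < N" using jk by (auto simp: UE_def)
  obtain c d where k: "k = (c, d)" "c < d" "d < N" using jk by (auto simp: UE_def)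
  show ?thesis
  proof (cases "j = k")
    case True
    then have cd: "c = a" "d = b" using j k by auto
    have "(\<integral>x. slen x j * g (slen x k) \<partial>posM N)
        = (\<integral>x. (\<integral>y. slen (x(b:=y)) j * g (slen (x(b:=y)) k) \<partial>U) \<partial>PiM ({..<N} - {b}) (\<lambda>_. U))"
      by (rule fubini_node[OF j(3) int])
    also have "\<dots> = (\<integral>x. (\<integral>y. wrap y * g (wrap y) \<partial>U) \<partial>PiM ({..<N} - {b}) (\<lambda>_. U))"
    proof (rule Bochner_Integration.integral_cong[OF refl])
      fix x
      have "(\<integral>y. slen (x(b:=y)) j * g (slen (x(b:=y)) k) \<partial>U) = (\<integral>y. wrap (y + - x a) * g (wrap (y + - x a)) \<partial>U)"
        using j(2) by (simp add: slen_def j k cd less_imp_neq)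
      also have "\<dots> = (\<integral>y. wrap y * g (wrap y) \<partial>U)"
        by (rule U_transl_h[where K="1/2 * K"]) (use bnd in auto)
      finally show "(\<integral>y. slen (x(b:=y)) j * g (slen (x(b:=y)) k) \<partial>U) = (\<integral>y. wrap y * g (wrap y) \<partial>U)" .
    qed
    also have "\<dots> = (\<integral>y. wrap y * g (wrap y) \<partial>U)"
      using prob_space.prob_space[OF prob_PiU[of "{..<N} - {b}"]] by simp
    finally show ?thesis using True by simp
  next
    case False
    have "b \<notin> {c, d} \<or> a \<notin> {c, d}" using False j k by auto
    then show ?thesis
    proof
      assume bn: "b \<notin> {c, d}"
      have "(\<integral>x. slen x j * g (slen x k) \<partial>posM N)
          = (\<integral>x. (\<integral>y. slen (x(b:=y)) j * g (slen (x(b:=y)) k) \<partial>U) \<partial>PiM ({..<N} - {b}) (\<lambda>_. U))"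
        by (rule fubini_node[OF j(3) int])
      also have "\<dots> = (\<integral>x. 0 \<partial>PiM ({..<N} - {b}) (\<lambda>_. U))"
      proof (rule Bochner_Integration.integral_cong[OF refl])
        fix x
        have "(\<integral>y. slen (x(b:=y)) j * g (slen (x(b:=y)) k) \<partial>U) = (\<integral>y. wrap (y + - x a) * g (slen x k) \<partial>U)"
          using j(2) bn by (simp add: slen_def j k less_imp_neq)
        also have "\<dots> = (\<integral>y. wrap (y + - x a) \<partial>U) * g (slen x k)" by simp
        also have "\<dots> = 0" using U_wrap_transl[of "- x a"] by simp
        finally show "(\<integral>y. slen (x(b:=y)) j * g (slen (x(b:=y)) k) \<partial>U) = 0" .
      qed
      finally show ?thesis using False by simp
    next
      assume an: "a \<notin> {c, d}"
      have aN: "a < N" using j by simp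
      have "(\<integral>x. slen x j * g (slen x k) \<partial>posM N)
          = (\<integral>x. (\<integral>y. slen (x(a:=y)) j * g (slen (x(a:=y)) k) \<partial>U) \<partial>PiM ({..<N} - {a}) (\<lambda>_. U))"
        by (rule fubini_node[OF aN int])
      also have "\<dots> = (\<integral>x. 0 \<partial>PiM ({..<N} - {a}) (\<lambda>_. U))"
      proof (rule Bochner_Integration.integral_cong[OF refl])
        fix x
        have "(\<integral>y. slen (x(a:=y)) j * g (slen (x(a:=y)) k) \<partial>U) = (\<integral>y. wrap (x b - y) * g (slen x k) \<partial>U)"
          using j(2) an by (simp add: slen_def j k less_imp_neq[symmetric])
        also have "\<dots> = (\<integral>y. wrap (x b - y) \<partial>U) * g (slen x k)" by simp
        also have "\<dots> = 0" by (simp add: U_wrap_refl)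
        finally show "(\<integral>y. slen (x(a:=y)) j * g (slen (x(a:=y)) k) \<partial>U) = 0" .
      qed
      finally show ?thesis using False by simp
    qed
  qed
qed


definition rlist :: "edge set \<Rightarrow> edge list" where
  "rlist R = (SOME rs. set rs = R \<and> distinct rs)"

lemma rlist: "finite R \<Longrightarrow> set (rlist R) = R \<and> distinct (rlist R)"
  unfolding rlist_def by (rule someI_ex) (rule finite_distinct_list)

definition PP :: "edge set \<Rightarrow> edge set \<Rightarrow> (edge \<Rightarrow> edge \<Rightarrow> real) \<Rightarrow> edge \<Rightarrow> edge \<Rightarrow> real" where
  "PP E R C i j = gs E (map C (rlist R)) (dlt j) i"

definition qq :: "edge set \<Rightarrow> edge set \<Rightarrow> (edge \<Rightarrow> edge \<Rightarrow> real) \<Rightarrow> edge \<Rightarrow> edge \<Rightarrow> real" where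
  "qq E R C i j = PP E R C i j - dlt j i"

lemma dl_repr:
  assumes "finite E" "finite R"
  shows "dl E R C i x = (\<Sum>j\<in>E. (if i \<in> E then PP E R C i j else 0) * slen x j) - slen x i"
proof -
  have "relaxed E R C (slen x) = (\<lambda>e. if e \<in> E then gs E (map C (rlist R)) (slen x) e else 0)"
    using rlist[OF assms(2)] by (intro relaxed_gs[OF assms(1)]) auto
  then show ?thesis
    unfolding dl_def PP_def using gs_linear[OF assms(1), of "map C (rlist R)" "slen x" i]
    by (auto simp: mult.commute)
qed

lemma dl_repr_in:
  assumes "finite E" "finite R" "i \<in> E"
  shows "dl E R C i x = (\<Sum>j\<in>E. qq E R C i j * slen x j)"
proof -
  have "slen x i = (\<Sum>j\<in>E. dlt j i * slen x j)"
    using assms by (simp add: dlt_def if_distrib[where f="\<lambda>a. a * _"] cong: if_cong)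
  then show ?thesis using dl_repr[OF assms(1,2)] assms(3)
    by (simp add: qq_def left_diff_distrib sum_subtractf)
qed

lemma qq_bound:
  assumes "finite E" "i \<in> E" "j \<in> E"
  shows "\<bar>qq E R C i j\<bar> \<le> 1"
proof -
  define vs where "vs = map C (rlist R)"
  define y where "y = gs E vs (dlt j)"
  have o: "ip E (\<lambda>e. dlt j e - y e) y = 0"
    unfolding y_def by (rule gs_span) (use gs_orth[OF assms(1)] in auto)
  have "y j = ip E (dlt j) y" using ip_dlt_left[OF assms(1,3)] by simp
  also have "\<dots> = ip E y y" using o by (simp add: ip_diff_left ip_sym)
  also have "\<dots> \<ge> 0" unfolding ip_def by (auto intro: sum_nonneg)
  finally have yj: "y j \<ge> 0" .
  have "(\<Sum>i\<in>E. (dlt j i - y i)\<^sup>2) = 1 - y j" unfolding y_def by (rule gs_resid_norm[OF assms(1,3)])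
  then have s: "(\<Sum>i\<in>E. (dlt j i - y i)\<^sup>2) \<le> 1" using yj by simp
  have "(dlt j i - y i)\<^sup>2 \<le> (\<Sum>i\<in>E. (dlt j i - y i)\<^sup>2)"
    by (rule member_le_sum) (use assms in auto)
  then have "(dlt j i - y i)\<^sup>2 \<le> 1" using s by simp
  then have "\<bar>dlt j i - y i\<bar> \<le> 1" using abs_square_le_1[of "dlt j i - y i"] by blast
  then show ?thesis by (simp add: qq_def PP_def y_def vs_def abs_minus_commute)
qed

lemma sum_qq_sq:
  assumes "finite E" "finite R"
  shows "(\<Sum>i\<in>E. \<Sum>j\<in>E. (qq E R C i j)\<^sup>2) = real (card E) - (\<Sum>j\<in>E. PP E R C j j)"
proof -
  have "(\<Sum>i\<in>E. \<Sum>j\<in>E. (qq E R C i j)\<^sup>2) = (\<Sum>j\<in>E. \<Sum>i\<in>E. (dlt j i - PP E R C i j)\<^sup>2)"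
    by (subst sum.swap) (simp add: qq_def power2_commute)
  also have "\<dots> = (\<Sum>j\<in>E. 1 - PP E R C j j)"
    by (intro sum.cong refl) (simp add: PP_def gs_resid_norm[OF assms(1)])
  also have "\<dots> = real (card E) - (\<Sum>j\<in>E. PP E R C j j)" by (simp add: sum_subtractf)
  finally show ?thesis .
qed

lemma trace_PP:
  assumes "finite E" "R \<subseteq> E" "\<And>r. r \<in> R \<Longrightarrow> C r r \<noteq> 0"
    "\<And>r r'. r \<in> R \<Longrightarrow> r' \<in> R \<Longrightarrow> r \<noteq> r' \<Longrightarrow> C r' r = 0"
  shows "(\<Sum>j\<in>E. PP E R C j j) = real (card R)"
proof -
  have fR: "finite R" using assms(1,2) finite_subset by blast
  define rs where "rs = map (\<lambda>r. (r, C r)) (rlist R)"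
  have "(\<Sum>j\<in>E. gs E (map snd rs) (dlt j) j) = real (length rs)"
  proof (rule gs_trace[OF assms(1)])
    show "distinct (map fst rs)" using rlist[OF fR] by (simp add: rs_def comp_def)
    show "\<forall>(r, v)\<in>set rs. r \<in> E \<and> v r \<noteq> 0" using rlist[OF fR] assms(2,3) by (auto simp: rs_def)
    show "\<forall>(r, v)\<in>set rs. \<forall>(r', v')\<in>set rs. r' \<noteq> r \<longrightarrow> v' r = 0"
      using rlist[OF fR] assms(4) by (auto simp: rs_def)
  qed
  moreover have "map snd rs = map C (rlist R)" by (simp add: rs_def comp_def)
  moreover have "length rs = card R" using rlist[OF fR] distinct_card by (fastforce simp: rs_def)
  ultimately show ?thesis by (simp add: PP_def)
qed


definition kap :: "(real \<Rightarrow> real) \<Rightarrow> real" where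
  "kap g = (\<integral>y. wrap y * g (wrap y) \<partial>U)"

lemma kap1: "kap (\<lambda>_. 1) = 0" using U_wrap0 by (simp add: kap_def)
lemma kapid: "kap (\<lambda>u. u) = 1/12" using U_wrap2 by (simp add: kap_def power2_eq_square)

lemma slen_meas_all[measurable]: "(\<lambda>x. slen x j) \<in> borel_measurable (posM N)"
proof -
  have c: "(\<lambda>x. x a) \<in> borel_measurable (posM N)" for a
  proof (cases "a < N")
    case True then show ?thesis unfolding posM_def
      by (auto intro!: measurable_component_singleton[where M="\<lambda>_. U", simplified])
  next
    case False
    have "(\<lambda>x. x a) \<in> borel_measurable (posM N) \<longleftrightarrow> (\<lambda>x. undefined :: real) \<in> borel_measurable (posM N)"
      by (rule Sigma_Algebra.measurable_cong) (use False in \<open>auto simp: posM_def space_PiM PiE_def extensional_def\<close>)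
    then show ?thesis by simp
  qed
  show ?thesis unfolding slen_def using c[of "fst j"] c[of "snd j"] by measurable
qed

lemma int_sg:
  fixes g :: "real \<Rightarrow> real"
  assumes [measurable]: "g \<in> borel_measurable borel" and gb: "\<And>u. \<bar>u\<bar> \<le> 1/2 \<Longrightarrow> \<bar>g u\<bar> \<le> K"
  shows "integrable (posM N) (\<lambda>x. slen x j * g (slen x k))"
proof -
  interpret P: prob_space "posM N" by (rule prob_posM)
  have K0: "0 \<le> K" using gb[of 0] by simp
  have bnd: "\<bar>u * g v\<bar> \<le> 1/2 * K" if "\<bar>u\<bar> \<le> 1/2" "\<bar>v\<bar> \<le> 1/2" for u v
    unfolding abs_mult by (rule mult_mono) (use that gb K0 in auto)
  show ?thesis
  proof (rule P.integrable_const_bound[where B="1/2 * K"])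
    show "AE x in posM N. norm (slen x j * g (slen x k)) \<le> 1/2 * K"
      by (intro AE_I2, unfold real_norm_def slen_def, rule bnd[OF abs_wrap abs_wrap])
  qed measurable
qed

lemma int_lin:
  fixes g :: "real \<Rightarrow> real"
  assumes [measurable]: "g \<in> borel_measurable borel" and gb: "\<And>u. \<bar>u\<bar> \<le> 1/2 \<Longrightarrow> \<bar>g u\<bar> \<le> K"
  shows "integrable (posM N) (\<lambda>x. (\<Sum>j\<in>E. c j * slen x j) * g (slen x k))"
proof -
  have "integrable (posM N) (\<lambda>x. \<Sum>j\<in>E. c j * (slen x j * g (slen x k)))"
    by (intro Bochner_Integration.integrable_sum integrable_mult_right int_sg[OF assms])
  then show ?thesis by (simp add: sum_distrib_right mult.assoc)
qed

lemma Lg: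
  fixes g :: "real \<Rightarrow> real"
  assumes E: "finite E" "E \<subseteq> UE N" and k: "k \<in> UE N"
    and [measurable]: "g \<in> borel_measurable borel" and gb: "\<And>u. \<bar>u\<bar> \<le> 1/2 \<Longrightarrow> \<bar>g u\<bar> \<le> K"
  shows "(\<integral>x. (\<Sum>j\<in>E. c j * slen x j) * g (slen x k) \<partial>posM N) = (if k \<in> E then c k * kap g else 0)"
proof -
  have "(\<integral>x. (\<Sum>j\<in>E. c j * slen x j) * g (slen x k) \<partial>posM N)
      = (\<integral>x. (\<Sum>j\<in>E. c j * (slen x j * g (slen x k))) \<partial>posM N)"
    by (simp add: sum_distrib_right mult.assoc)
  also have "\<dots> = (\<Sum>j\<in>E. c j * (\<integral>x. slen x j * g (slen x k) \<partial>posM N))"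
    by (subst Bochner_Integration.integral_sum) (auto intro!: integrable_mult_right int_sg[OF assms(4,5)])
  also have "\<dots> = (\<Sum>j\<in>E. c j * (if j = k then kap g else 0))"
  proof (intro sum.cong refl)
    fix j assume "j \<in> E"
    then have j: "j \<in> UE N" using E by auto
    show "c j * (\<integral>x. slen x j * g (slen x k) \<partial>posM N) = c j * (if j = k then kap g else 0)"
      using key[OF j k assms(4) gb] by (simp add: kap_def)
  qed
  also have "\<dots> = (if k \<in> E then c k * kap g else 0)"
    using E(1) by (simp add: if_distrib[where f="\<lambda>a. _ * a"] cong: if_cong)
  finally show ?thesis .
qed

lemma Lg_sq:
  assumes E: "finite E" "E \<subseteq> UE N"
  shows "(\<integral>x. (\<Sum>j\<in>E. c j * slen x j)\<^sup>2 \<partial>posM N) = (\<Sum>j\<in>E. (c j)\<^sup>2) / 12"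
proof -
  have gb: "\<And>u::real. \<bar>u\<bar> \<le> 1/2 \<Longrightarrow> \<bar>u\<bar> \<le> 1/2" by simp
  have "(\<integral>x. (\<Sum>j\<in>E. c j * slen x j)\<^sup>2 \<partial>posM N)
      = (\<integral>x. (\<Sum>k\<in>E. c k * ((\<Sum>j\<in>E. c j * slen x j) * slen x k)) \<partial>posM N)"
    by (simp add: power2_eq_square sum_distrib_left sum_distrib_right mult_ac)
  also have "\<dots> = (\<Sum>k\<in>E. c k * (\<integral>x. (\<Sum>j\<in>E. c j * slen x j) * slen x k \<partial>posM N))"
    by (subst Bochner_Integration.integral_sum) (auto intro!: integrable_mult_right int_lin[where g="\<lambda>u. u" and K="1/2"])
  also have "\<dots> = (\<Sum>k\<in>E. c k * (c k * kap (\<lambda>u. u)))"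
  proof (intro sum.cong refl)
    fix k assume "k \<in> E"
    then have k: "k \<in> UE N" using E by auto
    show "c k * (\<integral>x. (\<Sum>j\<in>E. c j * slen x j) * slen x k \<partial>posM N) = c k * (c k * kap (\<lambda>u. u))"
      using Lg[where g="\<lambda>u. u" and K="1/2" and c=c, OF E k _ gb] \<open>k \<in> E\<close> by simp
  qed
  finally show ?thesis by (simp add: kapid power2_eq_square sum_divide_distrib)
qed

lemma Lg_mean:
  assumes E: "finite E" "E \<subseteq> UE N" "k \<in> E"
  shows "(\<integral>x. (\<Sum>j\<in>E. c j * slen x j) \<partial>posM N) = 0"
  using Lg[OF E(1,2), of k "\<lambda>_. 1" 1 c] E by (auto simp: kap1)


lemma pps: "prob_space M1 \<Longrightarrow> prob_space M2 \<Longrightarrow> pair_prob_space M1 M2"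
  by (simp add: pair_prob_space_def pair_sigma_finite_def prob_space_imp_sigma_finite)

lemma cond_integral:
  fixes \<phi> :: "edge \<times> (nat \<Rightarrow> real) \<Rightarrow> real"
  assumes E: "finite E" "E \<noteq> {}" and m: "\<phi> \<in> borel_measurable (cond_ens N E)"
    and b: "\<And>\<omega>. \<bar>\<phi> \<omega>\<bar> \<le> B"
  shows "integrable (cond_ens N E) \<phi>"
    "(\<integral>\<omega>. \<phi> \<omega> \<partial>cond_ens N E) = (\<Sum>i\<in>E. \<integral>x. \<phi> (i, x) \<partial>posM N) / card E"
proof -
  interpret P: pair_prob_space "measure_pmf (pmf_of_set E)" "posM N"
    by (rule pps) (auto intro: prob_space_measure_pmf prob_posM)
  show int: "integrable (cond_ens N E) \<phi>"
    unfolding cond_ens_def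
    by (rule P.integrable_const_bound[where B=B]) (use m b in \<open>auto simp: cond_ens_def\<close>)
  have "(\<integral>\<omega>. \<phi> \<omega> \<partial>cond_ens N E) = (\<integral>i. (\<integral>x. \<phi> (i, x) \<partial>posM N) \<partial>measure_pmf (pmf_of_set E))"
    unfolding cond_ens_def by (rule P.integral_fst'[symmetric]) (use int in \<open>simp add: cond_ens_def\<close>)
  also have "\<dots> = (\<Sum>i\<in>E. \<integral>x. \<phi> (i, x) \<partial>posM N) / card E"
    by (rule integral_pmf_of_set[OF E(2,1)])
  finally show "(\<integral>\<omega>. \<phi> \<omega> \<partial>cond_ens N E) = (\<Sum>i\<in>E. \<integral>x. \<phi> (i, x) \<partial>posM N) / card E" .
qed

lemma int_graph_spring:
  fixes h :: "edge set \<times> edge \<Rightarrow> real"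
  assumes b: "\<And>E i. E \<in> set_pmf G \<Longrightarrow> \<bar>h (E, i)\<bar> \<le> B"
    and v: "\<And>E. E \<in> set_pmf G \<Longrightarrow> finite E \<and> E \<noteq> {} \<and> (\<Sum>i\<in>E. h (E, i)) / card E = c"
  shows "(\<integral>\<omega>. h \<omega> \<partial>measure_pmf (graph_spring G)) = c"
proof -
  define h' where "h' = (\<lambda>\<omega>. if fst \<omega> \<in> set_pmf G then h \<omega> else 0)"
  have "(\<integral>\<omega>. h \<omega> \<partial>measure_pmf (graph_spring G)) = (\<integral>\<omega>. h' \<omega> \<partial>measure_pmf (graph_spring G))"
    by (intro integral_cong_AE) (auto simp: AE_measure_pmf_iff graph_spring_def h'_def)
  also have "\<dots> = (\<integral>E. (\<integral>\<omega>. h' \<omega> \<partial>measure_pmf (map_pmf (\<lambda>i. (E, i)) (pmf_of_set E))) \<partial>measure_pmf G)"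
    unfolding graph_spring_def measure_pmf_bind
  proof (rule integral_bind[where K="count_space UNIV" and B=B and B'=1])
    show "\<And>x. x \<in> space (count_space UNIV) \<Longrightarrow> \<bar>h' x\<bar> \<le> B"
      using b by (auto simp: h'_def) (metis abs_ge_zero b order_trans prod.collapse set_pmf_not_empty ex_in_conv)
    show "(\<lambda>x. measure_pmf (map_pmf (Pair x) (pmf_of_set x))) \<in> measure_pmf G \<rightarrow>\<^sub>M subprob_algebra (count_space UNIV)"
      by (auto simp: space_subprob_algebra prob_space_measure_pmf prob_space_imp_subprob_space)
    show "finite_measure (measure_pmf G)" by (rule measure_pmf.finite_measure)
    show "AE x in measure_pmf G. emeasure (measure_pmf (map_pmf (Pair x) (pmf_of_set x)))
        (space (measure_pmf (map_pmf (Pair x) (pmf_of_set x)))) \<le> ennreal 1"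
      by (simp add: measure_pmf.emeasure_space_1)
  qed simp
  also have "\<dots> = (\<integral>E. c \<partial>measure_pmf G)"
  proof (intro integral_cong_AE)
    show "AE E in measure_pmf G. (\<integral>\<omega>. h' \<omega> \<partial>measure_pmf (map_pmf (\<lambda>i. (E, i)) (pmf_of_set E))) = c"
      unfolding AE_measure_pmf_iff
    proof
      fix E assume E: "E \<in> set_pmf G"
      have "(\<integral>\<omega>. h' \<omega> \<partial>measure_pmf (map_pmf (\<lambda>i. (E, i)) (pmf_of_set E))) = (\<integral>i. h' (E, i) \<partial>measure_pmf (pmf_of_set E))"
        by simp
      also have "\<dots> = (\<Sum>i\<in>E. h' (E, i)) / card E" using v[OF E] by (intro integral_pmf_of_set) auto
      also have "\<dots> = c" using v[OF E] E by (simp add: h'_def)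
      finally show "(\<integral>\<omega>. h' \<omega> \<partial>measure_pmf (map_pmf (\<lambda>i. (E, i)) (pmf_of_set E))) = c" .
    qed
  qed simp_all
  also have "\<dots> = c" by (simp add: measure_pmf.prob_space)
  finally show ?thesis .
qed

lemma bnd_int:
  fixes f :: "'a \<Rightarrow> real"
  assumes "prob_space M" "f \<in> borel_measurable M" "\<And>x. x \<in> space M \<Longrightarrow> \<bar>f x\<bar> \<le> B"
  shows "\<bar>\<integral>x. f x \<partial>M\<bar> \<le> B"
proof -
  interpret prob_space M by fact
  have int: "integrable M f" by (rule integrable_const_bound[where B=B]) (use assms in auto)
  have "\<bar>\<integral>x. f x \<partial>M\<bar> \<le> (\<integral>x. \<bar>f x\<bar> \<partial>M)" by (rule integral_abs_bound)
  also have "\<dots> \<le> (\<integral>x. B \<partial>M)" by (rule integral_mono) (use int assms in auto)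
  also have "\<dots> = B" using prob_space by simp
  finally show ?thesis .
qed

lemma ens_AE:
  "AE \<omega> in ens N G. fst (fst \<omega>) \<in> set_pmf G"
proof -
  interpret P: pair_prob_space "measure_pmf (graph_spring G)" "posM N"
    by (rule pps) (auto intro: prob_space_measure_pmf prob_posM)
  have m: "(\<lambda>\<omega>. fst (fst \<omega>) \<in> set_pmf G) \<in> measurable (ens N G) (count_space UNIV)"
    unfolding ens_def by (rule measurable_compose[OF measurable_fst]) simp
  show ?thesis unfolding ens_def
  proof (rule P.AE_pair_measure)
    show "{x \<in> space (measure_pmf (graph_spring G) \<Otimes>\<^sub>M posM N). fst (fst x) \<in> set_pmf G}
        \<in> sets (measure_pmf (graph_spring G) \<Otimes>\<^sub>M posM N)"
    proof -
      from predE[OF m] show ?thesis unfolding ens_def .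
    qed
    show "AE x in measure_pmf (graph_spring G). AE y in posM N. fst (fst (x, y)) \<in> set_pmf G"
      by (auto simp: AE_measure_pmf_iff graph_spring_def)
  qed
qed

lemma ens_integral:
  fixes \<phi> :: "(edge set \<times> edge) \<times> (nat \<Rightarrow> real) \<Rightarrow> real"
  assumes m: "\<phi> \<in> borel_measurable (ens N G)"
    and b: "\<And>E i x. E \<in> set_pmf G \<Longrightarrow> \<bar>\<phi> ((E, i), x)\<bar> \<le> B"
    and v: "\<And>E. E \<in> set_pmf G \<Longrightarrow> finite E \<and> E \<noteq> {} \<and> (\<Sum>i\<in>E. \<integral>x. \<phi> ((E, i), x) \<partial>posM N) / card E = c"
  shows "integrable (ens N G) \<phi>" "(\<integral>\<omega>. \<phi> \<omega> \<partial>ens N G) = c"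
proof -
  interpret P: pair_prob_space "measure_pmf (graph_spring G)" "posM N"
    by (rule pps) (auto intro: prob_space_measure_pmf prob_posM)
  have ae: "AE \<omega> in ens N G. norm (\<phi> \<omega>) \<le> B"
    using ens_AE[where N=N and G=G]
  proof eventually_elim
    fix \<omega> :: "(edge set \<times> edge) \<times> (nat \<Rightarrow> real)" assume "fst (fst \<omega>) \<in> set_pmf G"
    from b[OF this, of "snd (fst \<omega>)" "snd \<omega>"] show "norm (\<phi> \<omega>) \<le> B" by simp
  qed
  show int: "integrable (ens N G) \<phi>"
    using m ae unfolding ens_def by (intro P.integrable_const_bound[where B=B]) auto
  have "(\<integral>\<omega>. \<phi> \<omega> \<partial>ens N G) = (\<integral>\<omega>1. (\<integral>x. \<phi> (\<omega>1, x) \<partial>posM N) \<partial>measure_pmf (graph_spring G))"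
    unfolding ens_def by (rule P.integral_fst'[symmetric]) (use int in \<open>simp add: ens_def\<close>)
  also have "\<dots> = c"
  proof (rule int_graph_spring)
    fix E i assume E: "E \<in> set_pmf G"
    show "\<bar>\<integral>x. \<phi> ((E, i), x) \<partial>posM N\<bar> \<le> B"
    proof (rule bnd_int[OF prob_posM])
      show "(\<lambda>x. \<phi> ((E, i), x)) \<in> borel_measurable (posM N)"
        using m unfolding ens_def by (rule measurable_Pair2) simp
    qed (use b E in auto)
  next
    fix E assume "E \<in> set_pmf G"
    then show "finite E \<and> E \<noteq> {} \<and> (\<Sum>i\<in>E. \<integral>x. \<phi> ((E, i), x) \<partial>posM N) / card E = c" by (rule v)
  qed
  finally show "(\<integral>\<omega>. \<phi> \<omega> \<partial>ens N G) = c" .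
qed


lemma relaxed_inf:
  assumes "infinite E"
  shows "relaxed E R C lb = relaxed E R C (\<lambda>_. 0)"
proof -
  have "feasible E R C lb = feasible E R C (\<lambda>_. 0)"
    unfolding feasible_def using assms by simp
  then show ?thesis unfolding relaxed_def by simp
qed

lemma dl_gen:
  "dl E R C i x = (if finite E then (\<Sum>j\<in>E. (if i \<in> E then PP E R C i j else 0) * slen x j)
       else relaxed E R C (\<lambda>_. 0) i) - slen x i" if "finite E \<longrightarrow> finite R"
proof (cases "finite E")
  case True then show ?thesis using dl_repr[OF True] that by simp
next
  case False then show ?thesis using relaxed_inf[OF False, of R C "slen x"] by (simp add: dl_def)
qed

lemma slen_bound: "\<bar>slen x i\<bar> \<le> 1/2" unfolding slen_def by (rule abs_wrap)

lemma slen_idx_meas: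
  fixes idx :: "'b \<Rightarrow> edge"
  shows "(\<lambda>\<omega>. slen (snd \<omega>) (idx (fst \<omega>))) \<in> borel_measurable (measure_pmf p \<Otimes>\<^sub>M posM N)"
proof -
  have fstm: "(\<lambda>\<omega>. h (fst \<omega>)) \<in> measurable (measure_pmf p \<Otimes>\<^sub>M posM N) K" if "space K = UNIV" for h :: "'b \<Rightarrow> 'c" and K
    by (rule measurable_compose[OF measurable_fst]) (simp add: that)
  have sm: "(\<lambda>\<omega>. slen (snd \<omega>) j) \<in> borel_measurable (measure_pmf p \<Otimes>\<^sub>M posM N)" for j
    by (rule measurable_compose[OF measurable_snd slen_meas_all])
  show ?thesis
    by (rule measurable_compose_countable[where f="\<lambda>j \<omega>. slen (snd \<omega>) j" and g="\<lambda>\<omega>. idx (fst \<omega>)", OF sm fstm]) simp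
qed

lemma meas_gen:
  fixes a :: "'b \<Rightarrow> edge \<Rightarrow> real" and r :: "'b \<Rightarrow> real" and S :: "'b \<Rightarrow> edge set" and idx :: "'b \<Rightarrow> edge"
  shows "(\<lambda>\<omega>. (if finite (S (fst \<omega>)) then (\<Sum>j\<in>S (fst \<omega>). a (fst \<omega>) j * slen (snd \<omega>) j) else r (fst \<omega>))
      - slen (snd \<omega>) (idx (fst \<omega>))) \<in> borel_measurable (measure_pmf p \<Otimes>\<^sub>M posM N)"
proof -
  have fstm: "(\<lambda>\<omega>. h (fst \<omega>)) \<in> measurable (measure_pmf p \<Otimes>\<^sub>M posM N) K" if "space K = UNIV" for h :: "'b \<Rightarrow> 'c" and K
    by (rule measurable_compose[OF measurable_fst]) (simp add: that)
  have sm: "(\<lambda>\<omega>. slen (snd \<omega>) j) \<in> borel_measurable (measure_pmf p \<Otimes>\<^sub>M posM N)" for j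
    by (rule measurable_compose[OF measurable_snd slen_meas_all])
  have m2: "(\<lambda>\<omega>. slen (snd \<omega>) (idx (fst \<omega>))) \<in> borel_measurable (measure_pmf p \<Otimes>\<^sub>M posM N)"
    by (rule slen_idx_meas)
  define key where "key = (\<lambda>\<omega>::'b \<times> (nat \<Rightarrow> real). if finite (S (fst \<omega>)) then rlist (S (fst \<omega>)) else [])"
  define H where "H = (\<lambda>(l::edge list) \<omega>. if finite (S (fst \<omega>)) then (\<Sum>j\<in>set l. a (fst \<omega>) j * slen (snd \<omega>) j) else r (fst \<omega>))"
  have Hm: "H l \<in> borel_measurable (measure_pmf p \<Otimes>\<^sub>M posM N)" for l
  proof -
    have p: "(\<lambda>\<omega>. finite (S (fst \<omega>))) \<in> measurable (measure_pmf p \<Otimes>\<^sub>M posM N) (count_space UNIV)"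
      by (rule fstm) simp
    have "(\<lambda>\<omega>. (\<Sum>j\<in>set l. a (fst \<omega>) j * slen (snd \<omega>) j)) \<in> borel_measurable (measure_pmf p \<Otimes>\<^sub>M posM N)"
      by (intro borel_measurable_sum borel_measurable_times fstm sm) simp
    moreover have "(\<lambda>\<omega>. r (fst \<omega>)) \<in> borel_measurable (measure_pmf p \<Otimes>\<^sub>M posM N)"
      by (rule fstm) simp
    ultimately show ?thesis unfolding H_def using p by (intro measurable_If) (auto simp: pred_def)
  qed
  have m1: "(\<lambda>\<omega>. H (key \<omega>) \<omega>) \<in> borel_measurable (measure_pmf p \<Otimes>\<^sub>M posM N)"
  proof (rule measurable_compose_countable[where f=H and g=key])
    show "\<And>i. H i \<in> borel_measurable (measure_pmf p \<Otimes>\<^sub>M posM N)" by (rule Hm)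
    have "(\<lambda>\<omega>. (\<lambda>b. if finite (S b) then rlist (S b) else []) (fst \<omega>)) \<in> measurable (measure_pmf p \<Otimes>\<^sub>M posM N) (count_space UNIV)"
      by (rule fstm) simp
    then show "key \<in> measurable (measure_pmf p \<Otimes>\<^sub>M posM N) (count_space UNIV)" by (simp add: key_def)
  qed
  have eq: "H (key \<omega>) \<omega> = (if finite (S (fst \<omega>)) then (\<Sum>j\<in>S (fst \<omega>). a (fst \<omega>) j * slen (snd \<omega>) j) else r (fst \<omega>))" for \<omega>
    by (simp add: H_def key_def rlist)
  show ?thesis using borel_measurable_diff[OF m1 m2] unfolding eq .
qed

lemma dlRV_meas: "dlRV T C \<in> borel_measurable (ens N G)"
proof -
  define a where "a = (\<lambda>(b::edge set \<times> edge) j. if snd b \<in> fst b then PP (fst b) (fst b - T (fst b)) (C (fst b)) (snd b) j else 0)"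
  define r where "r = (\<lambda>b::edge set \<times> edge. relaxed (fst b) (fst b - T (fst b)) (C (fst b)) (\<lambda>_. 0) (snd b))"
  have "dlRV T C = (\<lambda>\<omega>. (if finite (fst (fst \<omega>)) then (\<Sum>j\<in>fst (fst \<omega>). a (fst \<omega>) j * slen (snd \<omega>) j)
       else r (fst \<omega>)) - slen (snd \<omega>) (snd (fst \<omega>)))"
  proof
    fix \<omega> :: "(edge set \<times> edge) \<times> (nat \<Rightarrow> real)"
    obtain E i x where w: "\<omega> = ((E, i), x)" by (metis prod.collapse)
    show "dlRV T C \<omega> = (if finite (fst (fst \<omega>)) then (\<Sum>j\<in>fst (fst \<omega>). a (fst \<omega>) j * slen (snd \<omega>) j)
       else r (fst \<omega>)) - slen (snd \<omega>) (snd (fst \<omega>))"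
      unfolding w dlRV_def Let_def a_def r_def by (simp add: dl_gen cong: if_cong)
  qed
  also have "\<dots> \<in> borel_measurable (ens N G)"
    unfolding ens_def by (rule meas_gen)
  finally show ?thesis .
qed

lemma lbarRV_meas: "lbarRV \<in> borel_measurable (ens N G)"
  unfolding lbarRV_def[abs_def] ens_def by (rule slen_idx_meas)

lemma cond_dl_meas:
  assumes "finite E" "finite R"
  shows "(\<lambda>(i, x). dl E R C i x) \<in> borel_measurable (cond_ens N E)"
proof -
  have "(\<lambda>(i, x). dl E R C i x) = (\<lambda>\<omega>. (if finite ((\<lambda>_. E) (fst \<omega>)) then (\<Sum>j\<in>(\<lambda>_. E) (fst \<omega>). (\<lambda>i j. if i \<in> E then PP E R C i j else 0) (fst \<omega>) j * slen (snd \<omega>) j)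
       else (\<lambda>_. 0) (fst \<omega>)) - slen (snd \<omega>) ((\<lambda>i. i) (fst \<omega>)))"
    by (rule ext) (auto simp: dl_repr assms split: prod.splits cong: if_cong)
  also have "\<dots> \<in> borel_measurable (cond_ens N E)"
    unfolding cond_ens_def by (rule meas_gen)
  finally show ?thesis .
qed

lemma dl_bound:
  assumes "finite E" "finite R"
  shows "\<bar>dl E R C i x\<bar> \<le> real (card E) / 2 + 1/2"
proof (cases "i \<in> E")
  case True
  have "\<bar>dl E R C i x\<bar> = \<bar>\<Sum>j\<in>E. qq E R C i j * slen x j\<bar>" by (simp add: dl_repr_in[OF assms True])
  also have "\<dots> \<le> (\<Sum>j\<in>E. \<bar>qq E R C i j * slen x j\<bar>)" by (rule sum_abs)
  also have "\<dots> \<le> (\<Sum>j\<in>E. 1 * (1/2))"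
    unfolding abs_mult
    by (intro sum_mono) (rule mult_mono[OF qq_bound[OF assms(1) True] slen_bound], auto)
  finally show ?thesis by simp
next
  case False
  then show ?thesis using dl_repr[OF assms, of C i x] slen_bound[of x i] by simp
qed


locale cyc =
  fixes N M :: nat and E Tr :: "edge set" and Cm :: "edge \<Rightarrow> edge \<Rightarrow> real"
  assumes Mpos: "M > 0" and vn: "valid_net N M E" and sc: "signed_cycle_matrix N E Tr Cm"
begin

lemma EU: "E \<subseteq> UE N" using vn by (auto simp: valid_net_def UE_def)
lemma cardE: "card E = M" using vn by (simp add: valid_net_def)
lemma finE: "finite E" using cardE Mpos card_ge_0_finite by auto
lemma neE: "E \<noteq> {}" using cardE Mpos by auto
lemma TrE: "Tr \<subseteq> E" using sc by (simp add: signed_cycle_matrix_def spanning_tree_def)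
lemma cardTr: "card Tr = N - 1" using sc by (simp add: signed_cycle_matrix_def spanning_tree_def)
lemma finR: "finite (E - Tr)" using finE by simp

lemma cardR: "real (card (E - Tr)) = real M - real (N - 1)"
  using card_Diff_subset[OF finite_subset[OF TrE finE] TrE] cardE cardTr card_mono[OF finE TrE]
  by (simp add: of_nat_diff)

lemma trace: "(\<Sum>j\<in>E. PP E (E - Tr) Cm j j) = real M - real (N - 1)"
proof -
  have "(\<Sum>j\<in>E. PP E (E - Tr) Cm j j) = real (card (E - Tr))"
  proof (rule trace_PP[OF finE])
    show "E - Tr \<subseteq> E" by auto
    show "\<And>r. r \<in> E - Tr \<Longrightarrow> Cm r r \<noteq> 0" using sc by (auto simp: signed_cycle_matrix_def)
    show "Cm r' r = 0" if "r \<in> E - Tr" "r' \<in> E - Tr" "r \<noteq> r'" for r r'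
    proof -
      have "\<forall>e. e \<notin> Tr \<union> {r'} \<longrightarrow> Cm r' e = 0" using sc that(2) unfolding signed_cycle_matrix_def by blast
      then show ?thesis using that by blast
    qed
  qed
  then show ?thesis using cardR by simp
qed

abbreviation "dd i x \<equiv> dl E (E - Tr) Cm i x"

lemma S_mean: "i \<in> E \<Longrightarrow> (\<integral>x. dd i x \<partial>posM N) = 0"
  by (simp add: dl_repr_in[OF finE finR] Lg_mean[OF finE EU])

lemma S_sq: "(\<Sum>i\<in>E. \<integral>x. (dd i x)\<^sup>2 \<partial>posM N) = real (N - 1) / 12"
proof -
  have "(\<Sum>i\<in>E. \<integral>x. (dd i x)\<^sup>2 \<partial>posM N) = (\<Sum>i\<in>E. (\<Sum>j\<in>E. (qq E (E - Tr) Cm i j)\<^sup>2) / 12)"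
    by (intro sum.cong refl) (simp add: dl_repr_in[OF finE finR] Lg_sq[OF finE EU])
  also have "\<dots> = (real (card E) - (\<Sum>j\<in>E. PP E (E - Tr) Cm j j)) / 12"
    by (simp add: sum_divide_distrib[symmetric] sum_qq_sq[OF finE finR])
  also have "\<dots> = real (N - 1) / 12" by (simp add: trace cardE)
  finally show ?thesis .
qed

lemma S_g:
  fixes g :: "real \<Rightarrow> real"
  assumes [measurable]: "g \<in> borel_measurable borel" and gb: "\<And>u. \<bar>u\<bar> \<le> 1/2 \<Longrightarrow> \<bar>g u\<bar> \<le> K"
  shows "(\<Sum>i\<in>E. \<integral>x. dd i x * g (slen x i) \<partial>posM N) = - real (N - 1) * kap g"
proof -
  have "(\<Sum>i\<in>E. \<integral>x. dd i x * g (slen x i) \<partial>posM N) = (\<Sum>i\<in>E. qq E (E - Tr) Cm i i * kap g)"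
  proof (intro sum.cong refl)
    fix i assume i: "i \<in> E"
    then have "i \<in> UE N" using EU by auto
    then show "(\<integral>x. dd i x * g (slen x i) \<partial>posM N) = qq E (E - Tr) Cm i i * kap g"
      using Lg[OF finE EU _ assms, where c="qq E (E - Tr) Cm i"] i
      by (simp add: dl_repr_in[OF finE finR i])
  qed
  also have "\<dots> = ((\<Sum>i\<in>E. PP E (E - Tr) Cm i i) - real (card E)) * kap g"
    by (simp add: qq_def dlt_def sum_distrib_right[symmetric] sum_subtractf)
  also have "\<dots> = - real (N - 1) * kap g" by (simp add: trace cardE)
  finally show ?thesis .
qed

lemma S_mix: "(\<Sum>i\<in>E. \<integral>x. (dd i x + p * slen x i)\<^sup>2 \<partial>posM N)
    = (real (N - 1) - 2 * p * real (N - 1) + p\<^sup>2 * real M) / 12"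
proof -
  have "(\<Sum>i\<in>E. \<integral>x. (dd i x + p * slen x i)\<^sup>2 \<partial>posM N)
      = (\<Sum>i\<in>E. (\<Sum>j\<in>E. (qq E (E - Tr) Cm i j + p * dlt j i)\<^sup>2) / 12)"
  proof (intro sum.cong refl)
    fix i assume i: "i \<in> E"
    have "\<And>x. dd i x + p * slen x i = (\<Sum>j\<in>E. (qq E (E - Tr) Cm i j + p * dlt j i) * slen x j)"
      using i finE by (simp add: dl_repr_in[OF finE finR i] distrib_right sum.distrib dlt_def
          if_distrib[where f="\<lambda>a. _ * a * _"] cong: if_cong)
    then show "(\<integral>x. (dd i x + p * slen x i)\<^sup>2 \<partial>posM N) = (\<Sum>j\<in>E. (qq E (E - Tr) Cm i j + p * dlt j i)\<^sup>2) / 12"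
      by (simp add: Lg_sq[OF finE EU])
  qed
  also have "\<dots> = (\<Sum>i\<in>E. (\<Sum>j\<in>E. (qq E (E - Tr) Cm i j)\<^sup>2) + 2 * p * qq E (E - Tr) Cm i i + p\<^sup>2) / 12"
  proof -
    have "(\<Sum>j\<in>E. (qq E (E - Tr) Cm i j + p * dlt j i)\<^sup>2) = (\<Sum>j\<in>E. (qq E (E - Tr) Cm i j)\<^sup>2) + 2 * p * qq E (E - Tr) Cm i i + p\<^sup>2"
      if i: "i \<in> E" for i
    proof -
      have "(\<Sum>j\<in>E. (qq E (E - Tr) Cm i j + p * dlt j i)\<^sup>2)
          = (\<Sum>j\<in>E. (qq E (E - Tr) Cm i j)\<^sup>2 + (if j = i then 2 * p * qq E (E - Tr) Cm i i + p\<^sup>2 else 0))"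
        by (intro sum.cong refl) (auto simp: dlt_def power2_eq_square algebra_simps)
      also have "\<dots> = (\<Sum>j\<in>E. (qq E (E - Tr) Cm i j)\<^sup>2) + 2 * p * qq E (E - Tr) Cm i i + p\<^sup>2"
        using i finE by (simp add: sum.distrib)
      finally show ?thesis .
    qed
    then show ?thesis by (simp add: sum_divide_distrib[symmetric])
  qed
  also have "\<dots> = ((\<Sum>i\<in>E. \<Sum>j\<in>E. (qq E (E - Tr) Cm i j)\<^sup>2) + 2 * p * (\<Sum>i\<in>E. qq E (E - Tr) Cm i i) + real (card E) * p\<^sup>2) / 12"
    by (simp add: sum.distrib sum_distrib_left)
  also have "(\<Sum>i\<in>E. qq E (E - Tr) Cm i i) = - real (N - 1)"
    by (simp add: qq_def dlt_def sum_subtractf trace cardE)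
  also have "(\<Sum>i\<in>E. \<Sum>j\<in>E. (qq E (E - Tr) Cm i j)\<^sup>2) = real (N - 1)"
    by (simp add: sum_qq_sq[OF finE finR] trace cardE)
  finally show ?thesis by (simp add: cardE algebra_simps)
qed

end

lemma L_g:
  fixes g :: "real \<Rightarrow> real"
  assumes "i \<in> UE N" and [measurable]: "g \<in> borel_measurable borel" and gb: "\<And>u. \<bar>u\<bar> \<le> 1/2 \<Longrightarrow> \<bar>g u\<bar> \<le> K"
  shows "(\<integral>x. slen x i * g (slen x i) \<partial>posM N) = kap g"
  using key[OF assms(1) assms(1) assms(2) gb] by (simp add: kap_def)

lemma L_mean: "i \<in> UE N \<Longrightarrow> (\<integral>x. slen x i \<partial>posM N) = 0"
  using L_g[of i N "\<lambda>_. 1" 1] kap1 by simp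

lemma L_sq: "i \<in> UE N \<Longrightarrow> (\<integral>x. (slen x i)\<^sup>2 \<partial>posM N) = 1/12"
  using L_g[of i N "\<lambda>u. u" "1/2"] kapid by (simp add: power2_eq_square)


lemma Var_zero_mean: "(\<integral>\<omega>. X \<omega> \<partial>M) = 0 \<Longrightarrow> Var M X = (\<integral>\<omega>. (X \<omega>)\<^sup>2 \<partial>M)"
  by (simp add: Var_def)

locale mainctx =
  fixes N M :: nat and z :: real and G :: "edge set pmf"
    and T :: "edge set \<Rightarrow> edge set" and C :: "edge set \<Rightarrow> edge \<Rightarrow> edge \<Rightarrow> real"
  assumes N3: "N \<ge> 3" and z2: "2 \<le> z" and hM: "real M = real N * z / 2"
    and supp: "\<forall>E \<in> set_pmf G. valid_net N M E \<and> signed_cycle_matrix N E (T E) (C E)"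
begin

lemma Mpos: "M > 0"
proof -
  have "real N * z / 2 > 0" using N3 z2 by (intro divide_pos_pos mult_pos_pos) auto
  then show ?thesis using hM by simp
qed

lemma p_eq: "2 / z * (1 - 1 / real N) = real (N - 1) / real M"
proof -
  have Npos: "real N > 0" using N3 by simp
  have zpos: "z > 0" using z2 by simp
  have "real (N - 1) = real N - 1" using N3 by (simp add: of_nat_diff)
  then show ?thesis unfolding hM using Npos zpos by (simp add: field_simps)
qed

lemma cycE: "E \<in> set_pmf G \<Longrightarrow> cyc N M E (T E) (C E)"
  using supp Mpos by (auto simp: cyc_def)

lemma suppE: "E \<in> set_pmf G \<Longrightarrow> finite E \<and> E \<noteq> {} \<and> card E = M \<and> E \<subseteq> UE N"
  using cyc.finE[OF cycE] cyc.neE[OF cycE] cyc.cardE[OF cycE] cyc.EU[OF cycE] by blast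

lemmas [measurable] = lbarRV_meas dlRV_meas

lemma lb_mean: "(\<integral>\<omega>. lbarRV \<omega> \<partial>ens N G) = 0"
proof (rule ens_integral(2)[where B="1/2"])
  show "lbarRV \<in> borel_measurable (ens N G)" by measurable
  show "\<bar>lbarRV ((E, i), x)\<bar> \<le> 1/2" for E i x using slen_bound[of x i] by (simp add: lbarRV_def)
  fix E assume E: "E \<in> set_pmf G"
  have "(\<Sum>i\<in>E. \<integral>x. lbarRV ((E, i), x) \<partial>posM N) = 0"
    using suppE[OF E] by (intro sum.neutral) (auto simp: lbarRV_def L_mean)
  then show "finite E \<and> E \<noteq> {} \<and> (\<Sum>i\<in>E. \<integral>x. lbarRV ((E, i), x) \<partial>posM N) / card E = 0"
    using suppE[OF E] by simp
qed

lemma lb_sq: "(\<integral>\<omega>. (lbarRV \<omega>)\<^sup>2 \<partial>ens N G) = 1/12"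
proof (rule ens_integral(2)[where B="1/4"])
  show "(\<lambda>\<omega>. (lbarRV \<omega>)\<^sup>2) \<in> borel_measurable (ens N G)" by measurable
  show "\<bar>(lbarRV ((E, i), x))\<^sup>2\<bar> \<le> 1/4" for E i x using sq_bound[OF slen_bound] by (simp add: lbarRV_def)
  fix E assume E: "E \<in> set_pmf G"
  have "(\<Sum>i\<in>E. \<integral>x. (lbarRV ((E, i), x))\<^sup>2 \<partial>posM N) = (\<Sum>i\<in>E. 1/12)"
    using suppE[OF E] by (intro sum.cong refl) (auto simp: lbarRV_def L_sq)
  then show "finite E \<and> E \<noteq> {} \<and> (\<Sum>i\<in>E. \<integral>x. (lbarRV ((E, i), x))\<^sup>2 \<partial>posM N) / card E = 1/12"
    using suppE[OF E] Mpos by simp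
qed

lemma VarL: "Var (ens N G) lbarRV = 1/12"
  using lb_mean lb_sq by (simp add: Var_zero_mean)

lemma sqb: "\<bar>x::real\<bar> \<le> B \<Longrightarrow> \<bar>x\<^sup>2\<bar> \<le> B\<^sup>2"
proof -
  assume h: "\<bar>x\<bar> \<le> B"
  have "\<bar>x\<bar>\<^sup>2 \<le> B\<^sup>2" by (rule power_mono[OF h]) simp
  then show ?thesis by simp
qed

lemma dlRV_eq: "dlRV T C ((E, i), x) = dl E (E - T E) (C E) i x"
  by (simp add: dlRV_def)

lemma dlRV_bnd: "E \<in> set_pmf G \<Longrightarrow> \<bar>dlRV T C ((E, i), x)\<bar> \<le> real M / 2 + 1/2"
  using dl_bound[of E "E - T E" "C E" i x] suppE[of E] by (simp add: dlRV_eq)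

lemma dl_mean: "(\<integral>\<omega>. dlRV T C \<omega> \<partial>ens N G) = 0"
proof (rule ens_integral(2)[where B="real M / 2 + 1/2"])
  show "dlRV T C \<in> borel_measurable (ens N G)" by measurable
  show "E \<in> set_pmf G \<Longrightarrow> \<bar>dlRV T C ((E, i), x)\<bar> \<le> real M / 2 + 1/2" for E i x by (rule dlRV_bnd)
  fix E assume E: "E \<in> set_pmf G"
  interpret cyc N M E "T E" "C E" by (rule cycE[OF E])
  have "(\<Sum>i\<in>E. \<integral>x. dlRV T C ((E, i), x) \<partial>posM N) = 0"
    by (intro sum.neutral) (auto simp: dlRV_eq S_mean)
  then show "finite E \<and> E \<noteq> {} \<and> (\<Sum>i\<in>E. \<integral>x. dlRV T C ((E, i), x) \<partial>posM N) / card E = 0"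
    using suppE[OF E] by simp
qed

lemma dl_sq: "(\<integral>\<omega>. (dlRV T C \<omega>)\<^sup>2 \<partial>ens N G) = real (N - 1) / real M / 12"
proof (rule ens_integral(2)[where B="(real M / 2 + 1/2)\<^sup>2"])
  show "(\<lambda>\<omega>. (dlRV T C \<omega>)\<^sup>2) \<in> borel_measurable (ens N G)" by measurable
  show "E \<in> set_pmf G \<Longrightarrow> \<bar>(dlRV T C ((E, i), x))\<^sup>2\<bar> \<le> (real M / 2 + 1/2)\<^sup>2" for E i x
    by (rule sqb[OF dlRV_bnd])
  fix E assume E: "E \<in> set_pmf G"
  interpret cyc N M E "T E" "C E" by (rule cycE[OF E])
  have h: "(\<Sum>i\<in>E. \<integral>x. (dlRV T C ((E, i), x))\<^sup>2 \<partial>posM N) = real (N - 1) / 12"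
    using S_sq by (simp add: dlRV_eq)
  have cE: "card E = M" by (rule cardE)
  show "finite E \<and> E \<noteq> {} \<and> (\<Sum>i\<in>E. \<integral>x. (dlRV T C ((E, i), x))\<^sup>2 \<partial>posM N) / card E = real (N - 1) / real M / 12"
    by (simp only: h cE) (use suppE[OF E] in simp)
qed

lemma VarD: "Var (ens N G) (dlRV T C) = 2 / z * (1 - 1 / real N) * Var (ens N G) lbarRV"
  using dl_mean dl_sq by (subst p_eq) (simp add: Var_zero_mean VarL)

lemma cond_part:
  assumes "valid_net N M E" "signed_cycle_matrix N E Tr Cm"
  shows "Var (cond_ens N E) (\<lambda>(i, x). dl E (E - Tr) Cm i x) = 2 / z * (1 - 1 / real N) * Var (ens N G) lbarRV"
proof -
  interpret cyc N M E Tr Cm using assms Mpos by (simp add: cyc_def)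
  have m[measurable]: "(\<lambda>(i, x). dl E (E - Tr) Cm i x) \<in> borel_measurable (cond_ens N E)"
    by (rule cond_dl_meas[OF finE finR])
  have b: "\<bar>(\<lambda>(i, x). dl E (E - Tr) Cm i x) \<omega>\<bar> \<le> real (card E) / 2 + 1/2" for \<omega>
    using dl_bound[OF finE finR] by (simp split: prod.splits)
  have mean: "(\<integral>\<omega>. (\<lambda>(i, x). dl E (E - Tr) Cm i x) \<omega> \<partial>cond_ens N E) = 0"
    using cond_integral(2)[OF finE neE m b] by (simp add: S_mean)
  have sq: "(\<integral>\<omega>. ((\<lambda>(i, x). dl E (E - Tr) Cm i x) \<omega>)\<^sup>2 \<partial>cond_ens N E) = real (N - 1) / real M / 12"
  proof -
    have m2: "(\<lambda>\<omega>. ((\<lambda>(i, x). dl E (E - Tr) Cm i x) \<omega>)\<^sup>2) \<in> borel_measurable (cond_ens N E)" by measurable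
    have b2: "\<bar>((\<lambda>(i, x). dl E (E - Tr) Cm i x) \<omega>)\<^sup>2\<bar> \<le> (real (card E) / 2 + 1/2)\<^sup>2" for \<omega>
      by (rule sqb[OF b])
    show ?thesis using cond_integral(2)[OF finE neE m2 b2] S_sq by (simp add: cardE)
  qed
  show ?thesis using mean sq by (subst p_eq) (simp add: Var_zero_mean VarL)
qed

lemma mix: "(\<integral>\<omega>. (dlRV T C \<omega> + p * lbarRV \<omega>)\<^sup>2 \<partial>ens N G)
    = (real (N - 1) - 2 * p * real (N - 1) + p\<^sup>2 * real M) / 12 / real M"
  and mix_int: "integrable (ens N G) (\<lambda>\<omega>. (dlRV T C \<omega> + p * lbarRV \<omega>)\<^sup>2)"
proof -
  have m: "(\<lambda>\<omega>. (dlRV T C \<omega> + p * lbarRV \<omega>)\<^sup>2) \<in> borel_measurable (ens N G)" by measurable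
  have b: "\<bar>(dlRV T C ((E, i), x) + p * lbarRV ((E, i), x))\<^sup>2\<bar> \<le> (real M / 2 + 1/2 + \<bar>p\<bar>)\<^sup>2"
    if E: "E \<in> set_pmf G" for E i x
  proof (rule sqb)
    have "\<bar>p * lbarRV ((E, i), x)\<bar> \<le> \<bar>p\<bar> * 1"
      unfolding abs_mult by (rule mult_left_mono) (use slen_bound[of x i] in \<open>auto simp: lbarRV_def\<close>)
    then show "\<bar>dlRV T C ((E, i), x) + p * lbarRV ((E, i), x)\<bar> \<le> real M / 2 + 1/2 + \<bar>p\<bar>"
      using dlRV_bnd[OF E, of i x] by linarith
  qed
  have v: "finite E \<and> E \<noteq> {} \<and> (\<Sum>i\<in>E. \<integral>x. (dlRV T C ((E, i), x) + p * lbarRV ((E, i), x))\<^sup>2 \<partial>posM N) / card E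
      = (real (N - 1) - 2 * p * real (N - 1) + p\<^sup>2 * real M) / 12 / real M"
    if E: "E \<in> set_pmf G" for E
  proof -
    interpret cyc N M E "T E" "C E" by (rule cycE[OF E])
    have h: "(\<Sum>i\<in>E. \<integral>x. (dlRV T C ((E, i), x) + p * lbarRV ((E, i), x))\<^sup>2 \<partial>posM N)
        = (real (N - 1) - 2 * p * real (N - 1) + p\<^sup>2 * real M) / 12"
      using S_mix[of p] by (simp add: dlRV_eq lbarRV_def)
    have cE: "card E = M" by (rule cardE)
    show ?thesis by (simp only: h cE) (use suppE[OF E] in simp)
  qed
  show "(\<integral>\<omega>. (dlRV T C \<omega> + p * lbarRV \<omega>)\<^sup>2 \<partial>ens N G)
    = (real (N - 1) - 2 * p * real (N - 1) + p\<^sup>2 * real M) / 12 / real M"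
    by (rule ens_integral(2)[OF m b v])
  show "integrable (ens N G) (\<lambda>\<omega>. (dlRV T C \<omega> + p * lbarRV \<omega>)\<^sup>2)"
    by (rule ens_integral(1)[OF m b v])
qed

lemma setint:
  assumes B[measurable]: "B \<in> sets borel"
  shows "(\<integral>\<omega>. dlRV T C \<omega> * indicator B (lbarRV \<omega>) \<partial>ens N G) = - (real (N - 1) / real M) * kap (indicator B)"
    "(\<integral>\<omega>. (- (real (N - 1) / real M) * lbarRV \<omega>) * indicator B (lbarRV \<omega>) \<partial>ens N G) = - (real (N - 1) / real M) * kap (indicator B)"
proof -
  have gm: "(indicator B :: real \<Rightarrow> real) \<in> borel_measurable borel" by measurable
  have gb: "\<And>u. \<bar>u\<bar> \<le> 1/2 \<Longrightarrow> \<bar>(indicator B u :: real)\<bar> \<le> 1" by (simp add: indicator_def)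
  show "(\<integral>\<omega>. dlRV T C \<omega> * indicator B (lbarRV \<omega>) \<partial>ens N G) = - (real (N - 1) / real M) * kap (indicator B)"
  proof (rule ens_integral(2)[where B="real M / 2 + 1/2"])
    show "(\<lambda>\<omega>. dlRV T C \<omega> * indicator B (lbarRV \<omega>)) \<in> borel_measurable (ens N G)" by measurable
    show "\<bar>dlRV T C ((E, i), x) * indicator B (lbarRV ((E, i), x))\<bar> \<le> real M / 2 + 1/2" if "E \<in> set_pmf G" for E i x
      using dlRV_bnd[OF that, of i x] by (auto simp: indicator_def abs_mult)
    fix E assume E: "E \<in> set_pmf G"
    interpret cyc N M E "T E" "C E" by (rule cycE[OF E])
    have h: "(\<Sum>i\<in>E. \<integral>x. dlRV T C ((E, i), x) * indicator B (lbarRV ((E, i), x)) \<partial>posM N) = - real (N - 1) * kap (indicator B)"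
      using S_g[OF gm gb] by (simp add: dlRV_eq lbarRV_def)
    have cE: "card E = M" by (rule cardE)
    show "finite E \<and> E \<noteq> {} \<and> (\<Sum>i\<in>E. \<integral>x. dlRV T C ((E, i), x) * indicator B (lbarRV ((E, i), x)) \<partial>posM N) / card E
      = - (real (N - 1) / real M) * kap (indicator B)"
      by (simp only: h cE) (use suppE[OF E] in simp)
  qed
  show "(\<integral>\<omega>. (- (real (N - 1) / real M) * lbarRV \<omega>) * indicator B (lbarRV \<omega>) \<partial>ens N G) = - (real (N - 1) / real M) * kap (indicator B)"
  proof (rule ens_integral(2)[where B="\<bar>real (N - 1) / real M\<bar>"])
    show "(\<lambda>\<omega>. (- (real (N - 1) / real M) * lbarRV \<omega>) * indicator B (lbarRV \<omega>)) \<in> borel_measurable (ens N G)" by measurable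
    show "\<bar>(- (real (N - 1) / real M) * lbarRV ((E, i), x)) * indicator B (lbarRV ((E, i), x))\<bar> \<le> \<bar>real (N - 1) / real M\<bar>" for E i x
    proof -
      have "\<bar>lbarRV ((E, i), x) * indicator B (lbarRV ((E, i), x))\<bar> \<le> 1"
        using slen_bound[of x i] by (auto simp: indicator_def lbarRV_def)
      then have "\<bar>real (N - 1) / real M\<bar> * \<bar>lbarRV ((E, i), x) * indicator B (lbarRV ((E, i), x))\<bar> \<le> \<bar>real (N - 1) / real M\<bar> * 1"
        by (intro mult_left_mono) auto
      then show ?thesis by (simp only: abs_mult abs_minus mult.assoc mult_1_right)
    qed
    fix E assume E: "E \<in> set_pmf G"
    have h: "(\<Sum>i\<in>E. \<integral>x. (- (real (N - 1) / real M) * lbarRV ((E, i), x)) * indicator B (lbarRV ((E, i), x)) \<partial>posM N)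
        = (\<Sum>i\<in>E. - (real (N - 1) / real M) * kap (indicator B))"
    proof (intro sum.cong refl)
      fix i assume "i \<in> E"
      then have i: "i \<in> UE N" using suppE[OF E] by auto
      have "(\<integral>x. (- (real (N - 1) / real M) * lbarRV ((E, i), x)) * indicator B (lbarRV ((E, i), x)) \<partial>posM N)
          = - (real (N - 1) / real M) * (\<integral>x. slen x i * indicator B (slen x i) \<partial>posM N)"
        by (simp add: lbarRV_def mult.assoc)
      also have "\<dots> = - (real (N - 1) / real M) * kap (indicator B)" by (simp add: L_g[OF i gm gb])
      finally show "(\<integral>x. (- (real (N - 1) / real M) * lbarRV ((E, i), x)) * indicator B (lbarRV ((E, i), x)) \<partial>posM N)
          = - (real (N - 1) / real M) * kap (indicator B)" .
    qed
    show "finite E \<and> E \<noteq> {} \<and> (\<Sum>i\<in>E. \<integral>x. (- (real (N - 1) / real M) * lbarRV ((E, i), x)) * indicator B (lbarRV ((E, i), x)) \<partial>posM N) / card E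
      = - (real (N - 1) / real M) * kap (indicator B)"
      by (simp only: h) (use suppE[OF E] in simp)
  qed
qed

lemma condexp_part:
  "(\<integral>\<omega>. cond_Var (ens N G) (vimage_algebra (space (ens N G)) lbarRV borel) (dlRV T C) \<omega> \<partial>ens N G)
     / Var (ens N G) lbarRV = 2 / z * (1 - 1 / real N) * (1 - 2 / z * (1 - 1 / real N))"
proof -
  define F where "F = vimage_algebra (space (ens N G)) lbarRV borel"
  define p where "p = real (N - 1) / real M"
  define X where "X = dlRV T C"
  have ps: "prob_space (ens N G)" unfolding ens_def
    by (intro prob_space_pair prob_space_measure_pmf prob_posM)
  have sF: "sets F = {lbarRV -` A \<inter> space (ens N G) | A. A \<in> sets borel}"
    unfolding F_def by (rule sets_vimage_algebra2) simp
  have subalg: "subalgebra (ens N G) F"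
    unfolding subalgebra_def
  proof
    show "space F = space (ens N G)" by (simp add: F_def)
    show "sets F \<subseteq> sets (ens N G)"
      unfolding sF using measurable_sets[OF lbarRV_meas] by blast
  qed
  interpret finite_measure_subalgebra "ens N G" F
    unfolding finite_measure_subalgebra_def finite_measure_subalgebra_axioms_def
    using ps subalg by (simp add: prob_space_def)
  have intX[measurable]: "integrable (ens N G) X"
  proof (rule ens_integral(1)[where B="real M / 2 + 1/2" and c=0])
    show "X \<in> borel_measurable (ens N G)" unfolding X_def by measurable
    show "E \<in> set_pmf G \<Longrightarrow> \<bar>X ((E, i), x)\<bar> \<le> real M / 2 + 1/2" for E i x unfolding X_def by (rule dlRV_bnd)
    fix E assume E: "E \<in> set_pmf G"
    interpret cyc N M E "T E" "C E" by (rule cycE[OF E])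
    have "(\<Sum>i\<in>E. \<integral>x. X ((E, i), x) \<partial>posM N) = 0"
      by (intro sum.neutral) (auto simp: X_def dlRV_eq S_mean)
    then show "finite E \<and> E \<noteq> {} \<and> (\<Sum>i\<in>E. \<integral>x. X ((E, i), x) \<partial>posM N) / card E = 0"
      using suppE[OF E] by simp
  qed
  have intY: "integrable (ens N G) (\<lambda>\<omega>. - p * lbarRV \<omega>)"
  proof -
    interpret prob_space "ens N G" by (rule ps)
    show ?thesis
    proof (rule integrable_const_bound[where B="\<bar>p\<bar>"])
      show "AE x in ens N G. norm (- p * lbarRV x) \<le> \<bar>p\<bar>"
      proof (rule AE_I2)
        fix \<omega>
        have "\<bar>p\<bar> * \<bar>lbarRV \<omega>\<bar> \<le> \<bar>p\<bar> * 1"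
          using slen_bound[of "snd \<omega>" "snd (fst \<omega>)"] by (intro mult_left_mono) (auto simp: lbarRV_def)
        then show "norm (- p * lbarRV \<omega>) \<le> \<bar>p\<bar>" by (simp add: abs_mult)
      qed
    qed measurable
  qed
  have YF: "(\<lambda>\<omega>. - p * lbarRV \<omega>) \<in> borel_measurable F"
  proof -
    have "lbarRV \<in> measurable F borel" unfolding F_def by (rule measurable_vimage_algebra1) simp
    then show ?thesis by measurable
  qed
  have ae: "AE \<omega> in ens N G. real_cond_exp (ens N G) F X \<omega> = - p * lbarRV \<omega>"
  proof (rule real_cond_exp_charact[OF _ intX intY YF])
    fix A assume "A \<in> sets F"
    then obtain B where B: "B \<in> sets borel" and A: "A = lbarRV -` B \<inter> space (ens N G)" unfolding sF by blast
    have "(\<integral>x\<in>A. X x \<partial>ens N G) = (\<integral>x. X x * indicator B (lbarRV x) \<partial>ens N G)"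
      unfolding set_lebesgue_integral_def A
      by (intro Bochner_Integration.integral_cong refl) (auto simp: indicator_def)
    also have "\<dots> = - p * kap (indicator B)" unfolding X_def p_def by (rule setint(1)[OF B])
    also have "\<dots> = (\<integral>x. (- p * lbarRV x) * indicator B (lbarRV x) \<partial>ens N G)"
      unfolding p_def by (rule setint(2)[OF B, symmetric])
    also have "\<dots> = (\<integral>x\<in>A. - p * lbarRV x \<partial>ens N G)"
      unfolding set_lebesgue_integral_def A
      by (intro Bochner_Integration.integral_cong refl) (auto simp: indicator_def)
    finally show "(\<integral>x\<in>A. X x \<partial>ens N G) = (\<integral>x\<in>A. - p * lbarRV x \<partial>ens N G)" .
  qed
  have aesq: "AE \<omega> in ens N G. (X \<omega> - real_cond_exp (ens N G) F X \<omega>)\<^sup>2 = (dlRV T C \<omega> + p * lbarRV \<omega>)\<^sup>2"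
    using ae by eventually_elim (simp add: X_def)
  have m1: "(\<lambda>\<omega>. (X \<omega> - real_cond_exp (ens N G) F X \<omega>)\<^sup>2) \<in> borel_measurable (ens N G)"
    unfolding X_def by measurable
  have m2: "(\<lambda>\<omega>. (dlRV T C \<omega> + p * lbarRV \<omega>)\<^sup>2) \<in> borel_measurable (ens N G)" by measurable
  have int1: "integrable (ens N G) (\<lambda>\<omega>. (X \<omega> - real_cond_exp (ens N G) F X \<omega>)\<^sup>2)"
    by (rule integrable_cong_AE_imp[OF mix_int m1]) (use aesq in \<open>auto elim: AE_mp\<close>)
  have "(\<integral>\<omega>. cond_Var (ens N G) F X \<omega> \<partial>ens N G) = (\<integral>\<omega>. (X \<omega> - real_cond_exp (ens N G) F X \<omega>)\<^sup>2 \<partial>ens N G)"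
    unfolding cond_Var_def by (rule real_cond_exp_int(2)[OF int1])
  also have "\<dots> = (\<integral>\<omega>. (dlRV T C \<omega> + p * lbarRV \<omega>)\<^sup>2 \<partial>ens N G)"
    by (rule integral_cong_AE[OF m1 m2 aesq])
  also have "\<dots> = (real (N - 1) - 2 * p * real (N - 1) + p\<^sup>2 * real M) / 12 / real M" by (rule mix)
  also have "\<dots> = (p - p\<^sup>2) / 12"
    using Mpos by (simp add: p_def field_simps power2_eq_square)
  finally have "(\<integral>\<omega>. cond_Var (ens N G) F X \<omega> \<partial>ens N G) = (p - p\<^sup>2) / 12" .
  then show ?thesis
    unfolding F_def[symmetric] X_def[symmetric] VarL p_eq p_def[symmetric]
    by (simp add: power2_eq_square algebra_simps)
qed

end


theorem mainTheorem4:
  fixes N M :: nat and z :: real and G :: "edge set pmf"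
    and T :: "edge set \<Rightarrow> edge set" and C :: "edge set \<Rightarrow> edge \<Rightarrow> edge \<Rightarrow> real"
  assumes "N \<ge> 3" and "2 \<le> z" and "z \<le> real N - 1" and "real M = real N * z / 2"
    and "\<forall>E \<in> set_pmf G. valid_net N M E \<and> signed_cycle_matrix N E (T E) (C E)"
  shows "Var (ens N G) lbarRV = 1 / 12
    \<and> (\<forall>E Tr Cm. valid_net N M E \<longrightarrow> signed_cycle_matrix N E Tr Cm \<longrightarrow>
         Var (cond_ens N E) (\<lambda>(i, x). dl E (E - Tr) Cm i x)
           = 2 / z * (1 - 1 / real N) * Var (ens N G) lbarRV)
    \<and> Var (ens N G) (dlRV T C) = 2 / z * (1 - 1 / real N) * Var (ens N G) lbarRV
    \<and> (\<integral>\<omega>. cond_Var (ens N G) (vimage_algebra (space (ens N G)) lbarRV borel) (dlRV T C) \<omega> \<partial>ens N G)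
         / Var (ens N G) lbarRV
       = 2 / z * (1 - 1 / real N) * (1 - 2 / z * (1 - 1 / real N))"
proof -
  interpret mainctx N M z G T C
    using assms by (unfold_locales) auto
  show ?thesis using VarL cond_part VarD condexp_part by auto
qed

end
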